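(* Let $(V,\rho)$ be an $n$-dimensional irreducible reflection representation of $(W,S)$, $S=\{s_1,\dots,s_k\}$, over a field $\mathbb{F}$ of characteristic $0$, with chosen reflection vectors $\alpha_1,\dots,\alpha_k$, and suppose $I=[n]\subseteq[k]$ is such that $G_I$ is weakly connected and $\{\alpha_1,\dots,\alpha_n\}$ is a basis of $V$. Let $0\le d\le n$ and let $\varphi$ be a $W$-module endomorphism of $\bigwedge^dV$. Then for each $d$-element subset $J=\{i_1,\dots,i_d\}\subseteq I$ there is a scalar $\gamma_J\in\mathbb{F}$ with $\varphi(\alpha_{i_1}\wedge\cdots\wedge\alpha_{i_d})=\gamma_J\,\alpha_{i_1}\wedge\cdots\wedge\alpha_{i_d}$; and if $J'\subseteq I$ is obtained from $J$ by a move in $G_I$, then $\gamma_J=\gamma_{J'}$.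
   Context: A linear map $s:V\to V$ is a (generalized) reflection if it is diagonalizable and $\operatorname{rank}(s-\operatorname{Id}_V)=1$; a reflection vector of $s$ is a nonzero vector in $\operatorname{Im}(s-\operatorname{Id}_V)$. A reflection representation of $(W,S)$ is a finite-dimensional representation with each $\rho(s_i)$ a reflection; $\alpha_i$ is a chosen reflection vector of $s_i$. $W$ acts diagonally on $\bigwedge^dV$. For $I\subseteq[k]$, the digraph $G_I$ has vertex set $I$ and an arrow $i\to j$ ($i\neq j$) iff $s_j\cdot\alpha_i\neq\alpha_i$; weakly connected means connected after forgetting directions. For subsets $J,J'$ of the vertex set, $J'$ is obtained from $J$ by a move if there exist $i\in J$, $j\in J'$ such that $J\setminus\{i\}=J'\setminus\{j\}$ and either $i\to j$ or $j\to i$ is an arrow. *)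

theory Defs
  imports "Jordan_Normal_Form.DL_Rank" "Jordan_Normal_Form.DL_Submatrix"
begin

text \<open>Vectors of V are modelled as elements of carrier_vec n; linear maps V to V as n x n matrices.\<close>

definition diagonalizable :: "'a::field mat \<Rightarrow> bool" where
  "diagonalizable A \<longleftrightarrow> (\<exists>D. diagonal_mat D \<and> similar_mat A D)"

definition is_reflection :: "nat \<Rightarrow> 'a::field mat \<Rightarrow> bool" where
  "is_reflection n A \<longleftrightarrow> A \<in> carrier_mat n n \<and> diagonalizable A
     \<and> vec_space.rank n (A - 1\<^sub>m n) = 1"

definition is_reflection_vector :: "nat \<Rightarrow> 'a::field mat \<Rightarrow> 'a vec \<Rightarrow> bool" where
  "is_reflection_vector n A a \<longleftrightarrow> a \<in> carrier_vec n \<and> a \<noteq> 0\<^sub>v n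
     \<and> (\<exists>v\<in>carrier_vec n. a = (A - 1\<^sub>m n) *\<^sub>v v)"

definition vec_basis :: "nat \<Rightarrow> 'a::field vec set \<Rightarrow> bool" where
  "vec_basis n B \<longleftrightarrow> vectorspace.basis class_ring (module_vec TYPE('a) n) B"

definition lin_subspace :: "nat \<Rightarrow> 'a::field vec set \<Rightarrow> bool" where
  "lin_subspace n U \<longleftrightarrow> U \<subseteq> carrier_vec n \<and> 0\<^sub>v n \<in> U
     \<and> (\<forall>u\<in>U. \<forall>v\<in>U. u + v \<in> U) \<and> (\<forall>c. \<forall>u\<in>U. c \<cdot>\<^sub>v u \<in> U)"

text \<open>Irreducibility of the representation generated by the matrices s 0, ..., s (k-1)
  (the image of W is generated by the images of the generators).\<close>
definition irreducible_rep :: "nat \<Rightarrow> nat \<Rightarrow> (nat \<Rightarrow> 'a::field mat) \<Rightarrow> bool" where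
  "irreducible_rep n k s \<longleftrightarrow> 0 < n \<and>
     (\<forall>U. lin_subspace n U \<and> (\<forall>i<k. \<forall>u\<in>U. s i *\<^sub>v u \<in> U)
          \<longrightarrow> U = {0\<^sub>v n} \<or> U = carrier_vec n)"

definition arrow :: "(nat \<Rightarrow> 'a::field mat) \<Rightarrow> (nat \<Rightarrow> 'a vec) \<Rightarrow> nat set \<Rightarrow> nat \<Rightarrow> nat \<Rightarrow> bool" where
  "arrow s \<alpha> I i j \<longleftrightarrow> i \<in> I \<and> j \<in> I \<and> i \<noteq> j \<and> s j *\<^sub>v \<alpha> i \<noteq> \<alpha> i"

definition weakly_connected :: "(nat \<Rightarrow> 'a::field mat) \<Rightarrow> (nat \<Rightarrow> 'a vec) \<Rightarrow> nat set \<Rightarrow> bool" where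
  "weakly_connected s \<alpha> I \<longleftrightarrow>
     (\<forall>i\<in>I. \<forall>j\<in>I. (\<lambda>x y. arrow s \<alpha> I x y \<or> arrow s \<alpha> I y x)\<^sup>*\<^sup>* i j)"

definition is_move :: "(nat \<Rightarrow> 'a::field mat) \<Rightarrow> (nat \<Rightarrow> 'a vec) \<Rightarrow> nat set \<Rightarrow> nat set \<Rightarrow> nat set \<Rightarrow> bool" where
  "is_move s \<alpha> I J J' \<longleftrightarrow> (\<exists>i\<in>J. \<exists>j\<in>J'. J - {i} = J' - {j}
      \<and> (arrow s \<alpha> I i j \<or> arrow s \<alpha> I j i))"

text \<open>Exterior power in coordinates: an element of the d-th exterior power of F^n is given by
  its coordinates f K with respect to the standard basis e_K = e_{k1} wedge ... wedge e_{kd}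
  (k1 < ... < kd), indexed by the d-element subsets K of {0..<n}.\<close>
definition ext_pow :: "nat \<Rightarrow> nat \<Rightarrow> (nat set \<Rightarrow> 'a::field) set" where
  "ext_pow n d = {f. \<forall>K. f K \<noteq> 0 \<longrightarrow> K \<subseteq> {..<n} \<and> card K = d}"

text \<open>Coordinates of v_1 wedge ... wedge v_d: the maximal minors (Pluecker coordinates).\<close>
definition wedge :: "nat \<Rightarrow> 'a::field vec list \<Rightarrow> nat set \<Rightarrow> 'a" where
  "wedge n vs K = (if K \<subseteq> {..<n} \<and> card K = length vs
      then det (submatrix (mat_of_cols n vs) K UNIV) else 0)"

text \<open>Diagonal action of a linear map g on the d-th exterior power:
  g (e_K) = g e_{k1} wedge ... wedge g e_{kd}, extended linearly.\<close>
definition ext_act :: "nat \<Rightarrow> nat \<Rightarrow> 'a::field mat \<Rightarrow> (nat set \<Rightarrow> 'a) \<Rightarrow> (nat set \<Rightarrow> 'a)" where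
  "ext_act n d g f = (\<lambda>L. \<Sum>K\<in>{K. K \<subseteq> {..<n} \<and> card K = d}.
      f K * wedge n (map (col g) (sorted_list_of_set K)) L)"

text \<open>W-module endomorphism of the d-th exterior power (commuting with the generators suffices,
  since the image of W is generated by the images of the generators).\<close>
definition ext_endo :: "nat \<Rightarrow> nat \<Rightarrow> nat \<Rightarrow> (nat \<Rightarrow> 'a::field mat)
    \<Rightarrow> ((nat set \<Rightarrow> 'a) \<Rightarrow> (nat set \<Rightarrow> 'a)) \<Rightarrow> bool" where
  "ext_endo n d k s \<phi> \<longleftrightarrow>
     (\<forall>f\<in>ext_pow n d. \<phi> f \<in> ext_pow n d)
   \<and> (\<forall>f\<in>ext_pow n d. \<forall>g\<in>ext_pow n d. \<phi> (\<lambda>K. f K + g K) = (\<lambda>K. \<phi> f K + \<phi> g K))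
   \<and> (\<forall>c. \<forall>f\<in>ext_pow n d. \<phi> (\<lambda>K. c * f K) = (\<lambda>K. c * \<phi> f K))
   \<and> (\<forall>i<k. \<forall>f\<in>ext_pow n d. \<phi> (ext_act n d (s i) f) = ext_act n d (s i) (\<phi> f))"

end

theory Submission
  imports Defs "Jordan_Normal_Form.DL_Rank_Submatrix"
begin

definition DS :: "nat \<Rightarrow> nat \<Rightarrow> nat set set" where
  "DS n d = {K. K \<subseteq> {..<n} \<and> card K = d}"

lemma finite_DS: "finite (DS n d)"
  unfolding DS_def by (rule finite_subset[of _ "Pow {..<n}"]) auto

definition idx :: "nat set \<Rightarrow> nat \<Rightarrow> nat" where
  "idx K x = card {y\<in>K. y < x}"

lemma idx_lt: assumes "finite K" "x \<in> K" shows "idx K x < card K"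
proof -
  have "{y\<in>K. y < x} \<subset> K" using assms by auto
  then show ?thesis unfolding idx_def using assms by (simp add: psubset_card_mono)
qed

lemma pick_idx: "x \<in> K \<Longrightarrow> pick K (idx K x) = x"
  unfolding idx_def by (rule pick_card_in_set)

lemma idx_pick: "a < card K \<Longrightarrow> idx K (pick K a) = a"
  unfolding idx_def by (rule card_pick) simp

lemma pick_in: "a < card K \<Longrightarrow> pick K a \<in> K"
  by (rule pick_in_set) simp

lemma pick_inj_iff: "a < card K \<Longrightarrow> b < card K \<Longrightarrow> pick K a = pick K b \<longleftrightarrow> a = b"
  by (metis idx_pick)

lemma idx_inj: "x \<in> K \<Longrightarrow> y \<in> K \<Longrightarrow> idx K x = idx K y \<longleftrightarrow> x = y"
  by (metis pick_idx)

lemma pick_image: assumes "finite K" shows "pick K ` {0..<card K} = K"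
proof
  show "pick K ` {0..<card K} \<subseteq> K" using pick_in by auto
  show "K \<subseteq> pick K ` {0..<card K}"
  proof
    fix x assume "x \<in> K"
    then show "x \<in> pick K ` {0..<card K}"
      using pick_idx[of x K] idx_lt[OF assms, of x] by (metis atLeastLessThan_iff image_eqI zero_le)
  qed
qed

lemma sorted_nth_pick:
  assumes "finite K" "j < card K"
  shows "sorted_list_of_set K ! j = pick K j"
proof -
  let ?xs = "sorted_list_of_set K"
  have len: "length ?xs = card K" by simp
  have sw: "sorted_wrt (<) ?xs" by (rule strict_sorted_list_of_set)
  have so: "sorted ?xs" by simp
  have dist: "distinct ?xs" by simp
  have set: "set ?xs = K" using assms by simp
  have eq: "{a\<in>K. a < ?xs ! j} = (\<lambda>i. ?xs ! i) ` {..<j}"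
  proof
    show "{a\<in>K. a < ?xs!j} \<subseteq> (\<lambda>i. ?xs!i) ` {..<j}"
    proof
      fix a assume "a \<in> {a\<in>K. a < ?xs!j}"
      then have aK: "a \<in> K" and alt: "a < ?xs!j" by auto
      then obtain i where i: "i < length ?xs" "?xs!i = a" using set by (metis in_set_conv_nth)
      have "i < j"
      proof (rule ccontr)
        assume "\<not> i < j" then have "j \<le> i" by simp
        then have "?xs!j \<le> ?xs!i" using sorted_nth_mono[OF so, of j i] i by simp
        with alt i show False by simp
      qed
      then show "a \<in> (\<lambda>i. ?xs!i) ` {..<j}" using i by auto
    qed
    show "(\<lambda>i. ?xs!i) ` {..<j} \<subseteq> {a\<in>K. a < ?xs!j}"
    proof
      fix a assume "a \<in> (\<lambda>i. ?xs!i) ` {..<j}"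
      then obtain i where ij: "i < j" "a = ?xs!i" by auto
      then have "?xs!i < ?xs!j" using sorted_wrt_nth_less[OF sw, of i j] assms len by simp
      moreover have "?xs!i \<in> K" using ij assms len set nth_mem[of i ?xs] by simp
      ultimately show "a \<in> {a\<in>K. a < ?xs!j}" using ij by simp
    qed
  qed
  have "card ((\<lambda>i. ?xs ! i) ` {..<j}) = j"
    using assms len by (subst card_image) (auto simp: inj_on_def nth_eq_iff_index_eq[OF dist])
  then have c: "card {a\<in>K. a < ?xs!j} = j" using eq by simp
  have "?xs ! j \<in> K" using assms len set nth_mem[of j ?xs] by simp
  then show ?thesis using pick_card_in_set[of "?xs!j" K] c by simp
qed

lemma lt_in_eq: "K \<subseteq> {..<n} \<Longrightarrow> {i. i < n \<and> i \<in> K} = K" by auto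

lemma submatrix_carrier:
  assumes "G \<in> carrier_mat n m" "L \<subseteq> {..<n}" "K \<subseteq> {..<m}"
  shows "submatrix G L K \<in> carrier_mat (card L) (card K)"
  using assms unfolding submatrix_def by (simp add: lt_in_eq)

lemma submatrix_idx:
  assumes "G \<in> carrier_mat n m" "L \<subseteq> {..<n}" "K \<subseteq> {..<m}" "a < card L" "b < card K"
  shows "submatrix G L K $$ (a,b) = G $$ (pick L a, pick K b)"
  using assms by (intro submatrix_index) (simp_all add: lt_in_eq)

lemma det_zero_row:
  assumes A: "A \<in> carrier_mat d d" and a: "a < d" and z: "\<And>b. b < d \<Longrightarrow> A $$ (a,b) = 0"
  shows "det A = 0"
proof -
  have "det A = (\<Sum>p | p permutes {0..<d}. of_int (sign p) * (\<Prod>i = 0..<d. A $$ (i, p i)))"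
    by (rule det_def'[OF A])
  also have "\<dots> = 0"
  proof (rule sum.neutral, rule ballI)
    fix p assume "p \<in> {p. p permutes {0..<d}}"
    then have p: "p permutes {0..<d}" by simp
    have "p a < d" using permutes_in_image[OF p, of a] a by simp
    then have "(\<Prod>i = 0..<d. A $$ (i, p i)) = 0"
      using a z by (intro prod_zero) (auto intro!: bexI[of _ a])
    then show "of_int (sign p) * (\<Prod>i = 0..<d. A $$ (i, p i)) = 0" by simp
  qed
  finally show ?thesis .
qed

lemma perm_agree:
  fixes d r :: nat
  assumes p: "p permutes {0..<d}" and s: "\<sigma> permutes {0..<d}" and r: "r < d"
    and ag: "\<And>a. a < d \<Longrightarrow> a \<noteq> r \<Longrightarrow> p a = \<sigma> a"
  shows "p = \<sigma>"
proof
  fix x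
  show "p x = \<sigma> x"
  proof (cases "x < d")
    case False
    then show ?thesis using permutes_not_in[OF p] permutes_not_in[OF s] by simp
  next
    case True
    show ?thesis
    proof (cases "x = r")
      case False then show ?thesis using ag True by simp
    next
      case xr: True
      show ?thesis
      proof (rule ccontr)
        assume ne: "p x \<noteq> \<sigma> x"
        have "p x \<in> {0..<d}" using permutes_in_image[OF p, of x] True by simp
        then obtain a where a: "a \<in> {0..<d}" "\<sigma> a = p x"
          using permutes_surj[OF s] by (metis permutes_image s imageE)
        have "a \<noteq> r" using a ne xr by auto
        then have "p a = p x" using ag a by simp
        then have "a = x" using permutes_inj[OF p] by (simp add: inj_eq)
        then show False using \<open>a \<noteq> r\<close> xr by simp
      qed
    qed
  qed
qed

lemma det_single_perm:
  assumes A: "A \<in> carrier_mat d d" and s: "\<sigma> permutes {0..<d}" and r: "r < d"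
    and z: "\<And>a b. a < d \<Longrightarrow> b < d \<Longrightarrow> a \<noteq> r \<Longrightarrow> b \<noteq> \<sigma> a \<Longrightarrow> A $$ (a,b) = 0"
    and o: "\<And>a. a < d \<Longrightarrow> a \<noteq> r \<Longrightarrow> A $$ (a, \<sigma> a) = 1"
  shows "det A = of_int (sign \<sigma>) * A $$ (r, \<sigma> r)"
proof -
  let ?f = "\<lambda>p. of_int (sign p) * (\<Prod>i = 0..<d. A $$ (i, p i))"
  let ?P = "{p. p permutes {0..<d}}"
  have fin: "finite ?P" by (rule finite_permutations) simp
  have "det A = sum ?f ?P" by (rule det_def'[OF A])
  also have "\<dots> = ?f \<sigma> + sum ?f (?P - {\<sigma>})" using fin s by (intro sum.remove) auto
  also have "sum ?f (?P - {\<sigma>}) = 0"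
  proof (rule sum.neutral, rule ballI)
    fix p assume "p \<in> ?P - {\<sigma>}"
    then have p: "p permutes {0..<d}" and ne: "p \<noteq> \<sigma>" by auto
    obtain a where a: "a < d" "a \<noteq> r" "p a \<noteq> \<sigma> a"
      using perm_agree[OF p s r] ne by blast
    have "p a < d" using permutes_in_image[OF p, of a] a by simp
    then have "(\<Prod>i = 0..<d. A $$ (i, p i)) = 0"
      using a z by (intro prod_zero) (auto intro!: bexI[of _ a])
    then show "?f p = 0" by simp
  qed
  also have "(\<Prod>i = 0..<d. A $$ (i, \<sigma> i)) = A $$ (r, \<sigma> r) * (\<Prod>i\<in>{0..<d} - {r}. A $$ (i, \<sigma> i))"
    using r by (intro prod.remove) auto
  also have "(\<Prod>i\<in>{0..<d} - {r}. A $$ (i, \<sigma> i)) = 1"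
    using o by (intro prod.neutral) auto
  finally show ?thesis by simp
qed

lemma submatrix_rows_carrier:
  assumes "Q \<in> carrier_mat n d" "K \<subseteq> {..<n}"
  shows "submatrix Q K UNIV \<in> carrier_mat (card K) d"
  using assms unfolding submatrix_def by (simp add: lt_in_eq)

lemma submatrix_cols_carrier:
  assumes "P \<in> carrier_mat d n" "K \<subseteq> {..<n}"
  shows "submatrix P UNIV K \<in> carrier_mat d (card K)"
  using assms unfolding submatrix_def by (simp add: lt_in_eq)

lemma cauchy_binet:
  fixes P Q :: "'a::comm_ring_1 mat"
  assumes P: "P \<in> carrier_mat d n" and Q: "Q \<in> carrier_mat n d"
  shows "det (P * Q) = (\<Sum>K\<in>DS n d. det (submatrix P UNIV K) * det (submatrix Q K UNIV))"
proof -
  let ?I = "{0..<d}" and ?N = "{0..<n}"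
  let ?PF = "PiE ?I (\<lambda>_. ?N)"
  let ?Inj = "{f \<in> ?PF. inj_on f ?I}"
  let ?S = "{p. p permutes ?I}"
  define DQ where "DQ f = det (mat d d (\<lambda>(i,j). Q $$ (f i, j)))" for f
  define h where "h f = (\<Prod>i\<in>?I. P $$ (i, f i)) * DQ f" for f
  have PQ: "P * Q \<in> carrier_mat d d" using P Q by simp
  have finS: "finite ?S" by (rule finite_permutations) simp
  have finPF: "finite ?PF" by (simp add: finite_PiE)
  have entry: "(P*Q) $$ (i,j) = (\<Sum>k\<in>?N. P $$ (i,k) * Q $$ (k,j))" if "i < d" "j < d" for i j
    using that P Q by (simp add: scalar_prod_def)
  have DQ_eq: "DQ f = (\<Sum>\<sigma>\<in>?S. of_int (sign \<sigma>) * (\<Prod>i\<in>?I. Q $$ (f i, \<sigma> i)))" for f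
  proof -
    have "DQ f = (\<Sum>\<sigma>\<in>?S. of_int (sign \<sigma>) * (\<Prod>i\<in>?I. mat d d (\<lambda>(i,j). Q $$ (f i, j)) $$ (i, \<sigma> i)))"
      unfolding DQ_def by (rule det_def') simp
    also have "\<dots> = (\<Sum>\<sigma>\<in>?S. of_int (sign \<sigma>) * (\<Prod>i\<in>?I. Q $$ (f i, \<sigma> i)))"
    proof (rule sum.cong[OF refl])
      fix \<sigma> assume "\<sigma> \<in> ?S"
      then have \<sigma>: "\<sigma> permutes ?I" by simp
      show "of_int (sign \<sigma>) * (\<Prod>i\<in>?I. mat d d (\<lambda>(i,j). Q $$ (f i, j)) $$ (i, \<sigma> i)) =
            of_int (sign \<sigma>) * (\<Prod>i\<in>?I. Q $$ (f i, \<sigma> i))"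
        using permutes_in_image[OF \<sigma>] by (intro arg_cong[where f="\<lambda>x. _ * x"] prod.cong) auto
    qed
    finally show ?thesis .
  qed
  have "det (P*Q) = (\<Sum>\<sigma>\<in>?S. of_int (sign \<sigma>) * (\<Prod>i\<in>?I. (P*Q) $$ (i, \<sigma> i)))"
    by (rule det_def'[OF PQ])
  also have "\<dots> = (\<Sum>\<sigma>\<in>?S. of_int (sign \<sigma>) * (\<Sum>f\<in>?PF. \<Prod>i\<in>?I. P $$ (i, f i) * Q $$ (f i, \<sigma> i)))"
  proof (rule sum.cong[OF refl])
    fix \<sigma> assume "\<sigma> \<in> ?S"
    then have \<sigma>: "\<sigma> permutes ?I" by simp
    have "(\<Prod>i\<in>?I. (P*Q) $$ (i, \<sigma> i)) = (\<Prod>i\<in>?I. \<Sum>k\<in>?N. P $$ (i,k) * Q $$ (k, \<sigma> i))"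
      using entry permutes_in_image[OF \<sigma>] by (intro prod.cong) auto
    also have "\<dots> = (\<Sum>f\<in>?PF. \<Prod>i\<in>?I. P $$ (i, f i) * Q $$ (f i, \<sigma> i))"
      by (rule prod_sum_PiE) auto
    finally show "of_int (sign \<sigma>) * (\<Prod>i\<in>?I. (P*Q) $$ (i, \<sigma> i)) =
       of_int (sign \<sigma>) * (\<Sum>f\<in>?PF. \<Prod>i\<in>?I. P $$ (i, f i) * Q $$ (f i, \<sigma> i))" by simp
  qed
  also have "\<dots> = (\<Sum>\<sigma>\<in>?S. \<Sum>f\<in>?PF. of_int (sign \<sigma>) * ((\<Prod>i\<in>?I. P $$ (i, f i)) * (\<Prod>i\<in>?I. Q $$ (f i, \<sigma> i))))"
    by (simp add: sum_distrib_left prod.distrib)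
  also have "\<dots> = (\<Sum>f\<in>?PF. \<Sum>\<sigma>\<in>?S. of_int (sign \<sigma>) * ((\<Prod>i\<in>?I. P $$ (i, f i)) * (\<Prod>i\<in>?I. Q $$ (f i, \<sigma> i))))"
    by (rule sum.swap)
  also have "\<dots> = (\<Sum>f\<in>?PF. h f)"
    unfolding h_def DQ_eq sum_distrib_left by (intro sum.cong refl) (simp add: ac_simps)
  also have "\<dots> = (\<Sum>f\<in>?Inj. h f)"
  proof (rule sum.mono_neutral_right[OF finPF])
    show "?Inj \<subseteq> ?PF" by auto
    show "\<forall>f\<in>?PF - ?Inj. h f = 0"
    proof
      fix f assume f: "f \<in> ?PF - ?Inj"
      then obtain i j where ij: "i \<in> ?I" "j \<in> ?I" "i \<noteq> j" "f i = f j" unfolding inj_on_def by auto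
      have "DQ f = 0" unfolding DQ_def
        by (rule det_identical_rows[of _ d i j]) (use ij in \<open>auto intro!: eq_vecI\<close>)
      then show "h f = 0" unfolding h_def by simp
    qed
  qed
  also have "\<dots> = (\<Sum>K\<in>DS n d. \<Sum>f\<in>{f\<in>?Inj. f ` ?I = K}. h f)"
  proof (rule sum.group[symmetric])
    show "finite ?Inj" using finPF by simp
    show "finite (DS n d)" by (rule finite_DS)
    show "(\<lambda>f. f ` ?I) ` ?Inj \<subseteq> DS n d"
    proof
      fix K assume "K \<in> (\<lambda>f. f ` ?I) ` ?Inj"
      then obtain f where f: "f \<in> ?Inj" "K = f ` ?I" by auto
      then have "K \<subseteq> {..<n}" by (auto simp: PiE_iff)
      moreover have "card K = d" using f by (simp add: card_image)
      ultimately show "K \<in> DS n d" unfolding DS_def by simp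
    qed
  qed
  also have "\<dots> = (\<Sum>K\<in>DS n d. det (submatrix P UNIV K) * det (submatrix Q K UNIV))"
  proof (rule sum.cong[OF refl])
    fix K assume K: "K \<in> DS n d"
    then have Kn: "K \<subseteq> {..<n}" and cK: "card K = d" unfolding DS_def by auto
    have fK: "finite K" using Kn finite_subset by blast
    have pk: "\<And>a. a < d \<Longrightarrow> pick K a \<in> K" using pick_in cK by metis
    have pinj: "\<And>a b. a < d \<Longrightarrow> b < d \<Longrightarrow> pick K a = pick K b \<longleftrightarrow> a = b"
      using pick_inj_iff cK by metis
    define r where "r \<tau> = restrict (\<lambda>i. pick K (\<tau> i)) ?I" for \<tau> :: "nat \<Rightarrow> nat"
    have bij: "bij_betw r ?S {f\<in>?Inj. f ` ?I = K}"
    proof (rule bij_betwI')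
      fix x y assume x: "x \<in> ?S" and y: "y \<in> ?S"
      then have x: "x permutes ?I" and y: "y permutes ?I" by auto
      show "(r x = r y) = (x = y)"
      proof
        assume eq: "r x = r y"
        show "x = y"
        proof
          fix i show "x i = y i"
          proof (cases "i < d")
            case True
            then have "pick K (x i) = pick K (y i)" using fun_cong[OF eq, of i] by (simp add: r_def)
            moreover have "x i < d" "y i < d"
              using permutes_in_image[OF x, of i] permutes_in_image[OF y, of i] True by auto
            ultimately show ?thesis using pinj[of "x i" "y i"] by simp
          next
            case False then show ?thesis using permutes_not_in[OF x] permutes_not_in[OF y] by simp
          qed
        qed
      qed simp
    next
      fix x assume "x \<in> ?S"
      then have x: "x permutes ?I" by simp
      have xi: "\<And>i. i < d \<Longrightarrow> x i < d" using permutes_in_image[OF x] by simp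
      have "r x \<in> ?PF"
      proof (rule PiE_I)
        fix i assume "i \<in> ?I"
        then have "pick K (x i) \<in> K" using pk xi by simp
        then show "r x i \<in> ?N" using Kn \<open>i \<in> ?I\<close> by (auto simp: r_def)
      qed (simp add: r_def)
      moreover have "inj_on (r x) ?I"
      proof (rule inj_onI)
        fix a b assume ab: "a \<in> ?I" "b \<in> ?I" "r x a = r x b"
        then have "pick K (x a) = pick K (x b)" by (simp add: r_def)
        moreover have "x a < d" "x b < d" using xi ab by auto
        ultimately have "x a = x b" using pinj by blast
        then show "a = b" using permutes_inj[OF x] by (simp add: inj_eq)
      qed
      moreover have "r x ` ?I = K"
      proof -
        have "r x ` ?I = (\<lambda>i. pick K (x i)) ` ?I" by (rule image_cong) (simp_all add: r_def)
        also have "\<dots> = pick K ` (x ` ?I)" by (simp add: image_image)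
        also have "\<dots> = pick K ` ?I" using permutes_image[OF x] by simp
        also have "\<dots> = K" using pick_image[OF fK] cK by simp
        finally show ?thesis .
      qed
      ultimately show "r x \<in> {f\<in>?Inj. f ` ?I = K}" by simp
    next
      fix f assume "f \<in> {f\<in>?Inj. f ` ?I = K}"
      then have fP: "f \<in> ?PF" and fi: "inj_on f ?I" and fI: "f ` ?I = K" by auto
      define \<tau> where "\<tau> i = (if i < d then idx K (f i) else i)" for i
      have fK': "\<And>i. i < d \<Longrightarrow> f i \<in> K" using fI by auto
      have tinj: "inj_on \<tau> ?I"
      proof (rule inj_onI)
        fix a b assume "a \<in> ?I" "b \<in> ?I" "\<tau> a = \<tau> b"
        then have "f a = f b" using idx_inj fK' by (auto simp: \<tau>_def)
        then show "a = b" using fi \<open>a \<in> ?I\<close> \<open>b \<in> ?I\<close> by (auto dest: inj_onD)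
      qed
      have tsub: "\<tau> ` ?I \<subseteq> ?I" using idx_lt[OF fK] fK' cK by (auto simp: \<tau>_def)
      have "card (\<tau> ` ?I) = card ?I" using tinj by (simp add: card_image)
      then have "\<tau> ` ?I = ?I" using tsub by (intro card_subset_eq) auto
      then have "bij_betw \<tau> ?I ?I" using tinj by (simp add: bij_betw_def)
      then have tp: "\<tau> permutes ?I" by (rule bij_imp_permutes) (simp add: \<tau>_def)
      have "f = r \<tau>"
      proof
        fix i show "f i = r \<tau> i"
        proof (cases "i < d")
          case True
          then have "f i \<in> K" by (rule fK')
          then have "pick K (idx K (f i)) = f i" by (rule pick_idx)
          then show ?thesis using True by (simp add: r_def \<tau>_def)
        next
          case False
          then have "i \<notin> ?I" by simp
          then have "f i = undefined" by (rule PiE_arb[OF fP])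
          then show ?thesis using False by (simp add: r_def)
        qed
      qed
      then show "\<exists>x\<in>?S. f = r x" using tp by blast
    qed
    have QK: "submatrix Q K UNIV \<in> carrier_mat d d" using submatrix_rows_carrier[OF Q Kn] cK by simp
    have PK: "submatrix P UNIV K \<in> carrier_mat d d" using submatrix_cols_carrier[OF P Kn] cK by simp
    have "(\<Sum>f\<in>{f\<in>?Inj. f`?I = K}. h f) = (\<Sum>\<tau>\<in>?S. h (r \<tau>))"
      by (rule sum.reindex_bij_betw[OF bij, symmetric])
    also have "\<dots> = (\<Sum>\<tau>\<in>?S. det (submatrix Q K UNIV) * (of_int (sign \<tau>) * (\<Prod>i\<in>?I. submatrix P UNIV K $$ (i, \<tau> i))))"
    proof (rule sum.cong[OF refl])
      fix \<tau> assume "\<tau> \<in> ?S" then have \<tau>: "\<tau> permutes ?I" by simp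
      have ti: "\<And>i. i < d \<Longrightarrow> \<tau> i < d" using permutes_in_image[OF \<tau>] by simp
      have "mat d d (\<lambda>(i,j). Q $$ (r \<tau> i, j)) = mat d d (\<lambda>(i,j). submatrix Q K UNIV $$ (\<tau> i, j))"
        by (rule eq_matI) (use Q ti cK Kn in \<open>auto simp: r_def submatrix_index pick_UNIV lt_in_eq\<close>)
      then have "DQ (r \<tau>) = of_int (sign \<tau>) * det (submatrix Q K UNIV)"
        unfolding DQ_def using det_permute_rows[OF QK \<tau>] by simp
      moreover have "(\<Prod>i\<in>?I. P $$ (i, r \<tau> i)) = (\<Prod>i\<in>?I. submatrix P UNIV K $$ (i, \<tau> i))"
        by (rule prod.cong[OF refl]) (use P ti cK Kn in \<open>auto simp: r_def submatrix_index pick_UNIV lt_in_eq\<close>)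
      ultimately show "h (r \<tau>) = det (submatrix Q K UNIV) * (of_int (sign \<tau>) * (\<Prod>i\<in>?I. submatrix P UNIV K $$ (i, \<tau> i)))"
        unfolding h_def by (simp add: ac_simps)
    qed
    also have "\<dots> = det (submatrix Q K UNIV) * det (submatrix P UNIV K)"
      unfolding det_def'[OF PK] sum_distrib_left by simp
    finally show "(\<Sum>f\<in>{f\<in>?Inj. f`?I = K}. h f) = det (submatrix P UNIV K) * det (submatrix Q K UNIV)"
      by (simp add: ac_simps)
  qed
  finally show ?thesis .
qed

definition delta :: "nat set \<Rightarrow> nat set \<Rightarrow> 'a::zero_neq_one" where
  "delta J = (\<lambda>K. if K = J then 1 else 0)"

lemma DS_iff: "K \<in> DS n d \<longleftrightarrow> K \<subseteq> {..<n} \<and> card K = d" by (simp add: DS_def)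

lemma DS_finite: "K \<in> DS n d \<Longrightarrow> finite K"
  unfolding DS_def using finite_subset by blast

lemma ext_act_def': "ext_act n d g f = (\<lambda>L. \<Sum>K\<in>DS n d. f K * wedge n (map (col g) (sorted_list_of_set K)) L)"
  unfolding ext_act_def DS_def by simp

lemma wedge_len_zero: "length vs = d \<Longrightarrow> L \<notin> DS n d \<Longrightarrow> wedge n vs L = 0"
  unfolding wedge_def DS_def by auto

lemma len_cols: "K \<in> DS n d \<Longrightarrow> length (map (col g) (sorted_list_of_set K)) = d"
  by (simp add: DS_def)

lemma wedge_col:
  assumes G: "G \<in> carrier_mat n n" and K: "K \<in> DS n d" and L: "L \<in> DS n d"
  shows "wedge n (map (col G) (sorted_list_of_set K)) L = det (submatrix G L K)"
proof -
  have Kn: "K \<subseteq> {..<n}" "card K = d" and Ln: "L \<subseteq> {..<n}" "card L = d" using K L by (auto simp: DS_def)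
  have fK: "finite K" using Kn finite_subset by blast
  let ?xs = "sorted_list_of_set K"
  let ?M = "mat_of_cols n (map (col G) ?xs)"
  have len: "length (map (col G) ?xs) = d" using Kn by simp
  have cond: "L \<subseteq> {..<n} \<and> card L = length (map (col G) ?xs)" using Ln len by simp
  have w: "wedge n (map (col G) ?xs) L = det (submatrix ?M L UNIV)"
    by (simp only: wedge_def if_P[OF cond])
  have eqM: "submatrix ?M L UNIV = submatrix G L K"
  proof (rule eq_matI)
    have Mc: "?M \<in> carrier_mat n d" using len by (metis mat_of_cols_carrier(1))
    have S1: "submatrix ?M L UNIV \<in> carrier_mat d d"
      using Mc Ln Kn unfolding submatrix_def by (simp add: lt_in_eq)
    have S2: "submatrix G L K \<in> carrier_mat d d" using submatrix_carrier[OF G Ln(1) Kn(1)] Ln Kn by simp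
    show "dim_row (submatrix ?M L UNIV) = dim_row (submatrix G L K)" using S1 S2 by simp
    show "dim_col (submatrix ?M L UNIV) = dim_col (submatrix G L K)" using S1 S2 by simp
    fix a b assume a: "a < dim_row (submatrix G L K)" and b: "b < dim_col (submatrix G L K)"
    have ad: "a < d" "b < d" using a b S2 by auto
    have pL: "pick L a < n" using pick_in[of a L] Ln ad by auto
    have sb: "?xs ! b = pick K b" using sorted_nth_pick[OF fK] ad Kn by simp
    have pK: "pick K b < n" using pick_in[of b K] Kn ad by auto
    have "submatrix ?M L UNIV $$ (a,b) = ?M $$ (pick L a, b)"
      using submatrix_index[of a ?M L b UNIV] Mc Ln Kn ad by (simp add: lt_in_eq pick_UNIV)
    also have "\<dots> = G $$ (pick L a, pick K b)"
      using mat_of_cols_index[OF pL, of b "map (col G) ?xs"] pL pK sb ad len G by simp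
    also have "\<dots> = submatrix G L K $$ (a,b)"
      using submatrix_idx[OF G Ln(1) Kn(1)] ad Ln Kn by simp
    finally show "submatrix ?M L UNIV $$ (a,b) = submatrix G L K $$ (a,b)" .
  qed
  show ?thesis using w eqM by simp
qed

lemma ext_act_pow: "ext_act n d g f \<in> ext_pow n d"
  unfolding ext_pow_def
proof (intro CollectI allI impI)
  fix K assume ne: "ext_act n d g f K \<noteq> 0"
  have "K \<in> DS n d"
  proof (rule ccontr)
    assume nK: "K \<notin> DS n d"
    have "ext_act n d g f K = 0" unfolding ext_act_def'
      by (intro sum.neutral ballI) (simp add: wedge_len_zero[OF len_cols nK])
    with ne show False by simp
  qed
  then show "K \<subseteq> {..<n} \<and> card K = d" by (simp add: DS_def)
qed

lemma ext_act_add: "ext_act n d g (\<lambda>K. f K + h K) = (\<lambda>L. ext_act n d g f L + ext_act n d g h L)"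
  unfolding ext_act_def' by (simp add: sum.distrib distrib_right)

lemma ext_act_smult: "ext_act n d g (\<lambda>K. c * f K) = (\<lambda>L. c * ext_act n d g f L)"
  unfolding ext_act_def' by (simp add: sum_distrib_left mult.assoc)

lemma ext_act_delta:
  assumes "K \<in> DS n d"
  shows "ext_act n d g (delta K) = wedge n (map (col g) (sorted_list_of_set K))"
proof
  fix L
  have "ext_act n d g (delta K) L = (\<Sum>K'\<in>DS n d. if K' = K then wedge n (map (col g) (sorted_list_of_set K')) L else 0)"
    unfolding ext_act_def' delta_def by (intro sum.cong refl) simp
  also have "\<dots> = wedge n (map (col g) (sorted_list_of_set K)) L"
    using assms finite_DS by (simp add: sum.delta)
  finally show "ext_act n d g (delta K) L = wedge n (map (col g) (sorted_list_of_set K)) L" .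
qed

lemma cb_sq:
  fixes G H :: "'a::comm_ring_1 mat"
  assumes G: "G \<in> carrier_mat n n" and H: "H \<in> carrier_mat n n" and L: "L \<in> DS n d" and M: "M \<in> DS n d"
  shows "det (submatrix (G*H) L M) = (\<Sum>K\<in>DS n d. det (submatrix G L K) * det (submatrix H K M))"
proof -
  have Ln: "L \<subseteq> {..<n}" "card L = d" and Mn: "M \<subseteq> {..<n}" "card M = d" using L M by (auto simp: DS_def)
  let ?P = "submatrix G L UNIV" and ?Q = "submatrix H UNIV M"
  have P: "?P \<in> carrier_mat d n" using G Ln unfolding submatrix_def by (simp add: lt_in_eq)
  have Q: "?Q \<in> carrier_mat n d" using H Mn unfolding submatrix_def by (simp add: lt_in_eq)
  have GH: "G * H \<in> carrier_mat n n" using G H by simp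
  have S: "submatrix (G*H) L M \<in> carrier_mat d d" using submatrix_carrier[OF GH Ln(1) Mn(1)] Ln Mn by simp
  have PQ: "?P * ?Q = submatrix (G*H) L M"
  proof (rule eq_matI)
    fix a b assume "a < dim_row (submatrix (G*H) L M)" "b < dim_col (submatrix (G*H) L M)"
    then have ab: "a < d" "b < d" using S by auto
    have pa: "pick L a < n" "pick M b < n" using pick_in[of a L] pick_in[of b M] ab Ln Mn by auto
    have "(?P * ?Q) $$ (a,b) = (\<Sum>k\<in>{0..<n}. ?P $$ (a,k) * ?Q $$ (k,b))"
      using P Q ab by (simp add: scalar_prod_def)
    also have "\<dots> = (\<Sum>k\<in>{0..<n}. G $$ (pick L a, k) * H $$ (k, pick M b))"
    proof (rule sum.cong[OF refl])
      fix k assume "k \<in> {0..<n}"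
      then have k: "k < n" by simp
      have "?P $$ (a,k) = G $$ (pick L a, k)"
        using submatrix_index[of a G L k UNIV] G Ln ab k by (simp add: lt_in_eq pick_UNIV)
      moreover have "?Q $$ (k,b) = H $$ (k, pick M b)"
        using submatrix_index[of k H UNIV b M] H Mn ab k by (simp add: lt_in_eq pick_UNIV)
      ultimately show "?P $$ (a,k) * ?Q $$ (k,b) = G $$ (pick L a, k) * H $$ (k, pick M b)" by simp
    qed
    also have "\<dots> = (G*H) $$ (pick L a, pick M b)"
      using G H pa by (simp add: scalar_prod_def)
    also have "\<dots> = submatrix (G*H) L M $$ (a,b)"
      using submatrix_idx[OF GH Ln(1) Mn(1)] ab Ln Mn by simp
    finally show "(?P * ?Q) $$ (a,b) = submatrix (G*H) L M $$ (a,b)" .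
  qed (use P Q S in auto)
  have PK: "submatrix ?P UNIV K = submatrix G L K" if K: "K \<in> DS n d" for K
  proof -
    have Kn: "K \<subseteq> {..<n}" "card K = d" using K by (auto simp: DS_def)
    have S1: "submatrix ?P UNIV K \<in> carrier_mat d d"
      using submatrix_cols_carrier[OF P Kn(1)] Kn by simp
    have S2: "submatrix G L K \<in> carrier_mat d d" using submatrix_carrier[OF G Ln(1) Kn(1)] Ln Kn by simp
    show ?thesis
    proof (rule eq_matI)
      fix a b assume "a < dim_row (submatrix G L K)" "b < dim_col (submatrix G L K)"
      then have ab: "a < d" "b < d" using S2 by auto
      have pk: "pick K b < n" using pick_in[of b K] Kn ab by auto
      have "submatrix ?P UNIV K $$ (a,b) = ?P $$ (a, pick K b)"
        using submatrix_index[of a ?P UNIV b K] P Kn ab by (simp add: lt_in_eq pick_UNIV)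
      also have "\<dots> = G $$ (pick L a, pick K b)"
        using submatrix_index[of a G L "pick K b" UNIV] G Ln ab pk by (simp add: lt_in_eq pick_UNIV)
      also have "\<dots> = submatrix G L K $$ (a,b)"
        using submatrix_idx[OF G Ln(1) Kn(1)] ab Ln Kn by simp
      finally show "submatrix ?P UNIV K $$ (a,b) = submatrix G L K $$ (a,b)" .
    qed (use S1 S2 in auto)
  qed
  have QK: "submatrix ?Q K UNIV = submatrix H K M" if K: "K \<in> DS n d" for K
  proof -
    have Kn: "K \<subseteq> {..<n}" "card K = d" using K by (auto simp: DS_def)
    have S1: "submatrix ?Q K UNIV \<in> carrier_mat d d"
      using submatrix_rows_carrier[OF Q Kn(1)] Kn by simp
    have S2: "submatrix H K M \<in> carrier_mat d d" using submatrix_carrier[OF H Kn(1) Mn(1)] Mn Kn by simp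
    show ?thesis
    proof (rule eq_matI)
      fix a b assume "a < dim_row (submatrix H K M)" "b < dim_col (submatrix H K M)"
      then have ab: "a < d" "b < d" using S2 by auto
      have pk: "pick K a < n" using pick_in[of a K] Kn ab by auto
      have "submatrix ?Q K UNIV $$ (a,b) = ?Q $$ (pick K a, b)"
        using submatrix_index[of a ?Q K b UNIV] Q Kn ab by (simp add: lt_in_eq pick_UNIV)
      also have "\<dots> = H $$ (pick K a, pick M b)"
        using submatrix_index[of "pick K a" H UNIV b M] H Mn ab pk by (simp add: lt_in_eq pick_UNIV)
      also have "\<dots> = submatrix H K M $$ (a,b)"
        using submatrix_idx[OF H Kn(1) Mn(1)] ab Mn Kn by simp
      finally show "submatrix ?Q K UNIV $$ (a,b) = submatrix H K M $$ (a,b)" .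
    qed (use S1 S2 in auto)
  qed
  have "det (submatrix (G*H) L M) = det (?P * ?Q)" using PQ by simp
  also have "\<dots> = (\<Sum>K\<in>DS n d. det (submatrix ?P UNIV K) * det (submatrix ?Q K UNIV))"
    by (rule cauchy_binet[OF P Q])
  also have "\<dots> = (\<Sum>K\<in>DS n d. det (submatrix G L K) * det (submatrix H K M))"
    by (rule sum.cong[OF refl]) (simp add: PK QK)
  finally show ?thesis .
qed

lemma ext_act_at:
  assumes G: "G \<in> carrier_mat n n" and L: "L \<in> DS n d"
  shows "ext_act n d G f L = (\<Sum>K\<in>DS n d. f K * det (submatrix G L K))"
  unfolding ext_act_def' by (intro sum.cong refl) (simp add: wedge_col[OF G _ L])

lemma ext_act_out:
  assumes L: "L \<notin> DS n d"
  shows "ext_act n d G f L = 0"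
  unfolding ext_act_def' by (intro sum.neutral ballI) (simp add: wedge_len_zero[OF len_cols L])

lemma ext_act_comp:
  fixes G H :: "'a::field mat"
  assumes G: "G \<in> carrier_mat n n" and H: "H \<in> carrier_mat n n"
  shows "ext_act n d G (ext_act n d H f) = ext_act n d (G * H) f"
proof
  fix L
  show "ext_act n d G (ext_act n d H f) L = ext_act n d (G*H) f L"
  proof (cases "L \<in> DS n d")
    case False
    then show ?thesis by (simp add: ext_act_out)
  next
    case L: True
    have GH: "G * H \<in> carrier_mat n n" using G H by simp
    have "ext_act n d G (ext_act n d H f) L = (\<Sum>K\<in>DS n d. ext_act n d H f K * det (submatrix G L K))"
      by (rule ext_act_at[OF G L])
    also have "\<dots> = (\<Sum>K\<in>DS n d. (\<Sum>M\<in>DS n d. f M * det (submatrix H K M)) * det (submatrix G L K))"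
      by (intro sum.cong refl) (simp add: ext_act_at[OF H])
    also have "\<dots> = (\<Sum>K\<in>DS n d. \<Sum>M\<in>DS n d. f M * (det (submatrix G L K) * det (submatrix H K M)))"
      by (intro sum.cong refl) (simp add: sum_distrib_left sum_distrib_right ac_simps)
    also have "\<dots> = (\<Sum>M\<in>DS n d. \<Sum>K\<in>DS n d. f M * (det (submatrix G L K) * det (submatrix H K M)))"
      by (rule sum.swap)
    also have "\<dots> = (\<Sum>M\<in>DS n d. f M * det (submatrix (G*H) L M))"
      by (intro sum.cong refl) (simp add: cb_sq[OF G H L] sum_distrib_left)
    also have "\<dots> = ext_act n d (G*H) f L" by (rule ext_act_at[OF GH L, symmetric])
    finally show ?thesis .
  qed
qed

lemma det_sub_one:
  assumes L: "L \<in> DS n d" and K: "K \<in> DS n d"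
  shows "det (submatrix (1\<^sub>m n :: 'a::field mat) L K) = (if L = K then 1 else 0)"
proof -
  have Kn: "K \<subseteq> {..<n}" "card K = d" and Ln: "L \<subseteq> {..<n}" "card L = d" using K L by (auto simp: DS_def)
  have fK: "finite K" "finite L" using Kn Ln finite_subset by auto
  have one: "(1\<^sub>m n :: 'a mat) \<in> carrier_mat n n" by simp
  have S: "submatrix (1\<^sub>m n :: 'a mat) L K \<in> carrier_mat d d"
    using submatrix_carrier[OF one Ln(1) Kn(1)] Ln Kn by simp
  show ?thesis
  proof (cases "L = K")
    case True
    have "submatrix (1\<^sub>m n :: 'a mat) L K = 1\<^sub>m d"
    proof (rule eq_matI)
      fix a b assume "a < dim_row (1\<^sub>m d :: 'a mat)" "b < dim_col (1\<^sub>m d :: 'a mat)"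
      then have ab: "a < d" "b < d" by auto
      have p: "pick K a < n" "pick K b < n" using pick_in[of a K] pick_in[of b K] Kn ab by auto
      have "submatrix (1\<^sub>m n :: 'a mat) L K $$ (a,b) = (1\<^sub>m n :: 'a mat) $$ (pick K a, pick K b)"
        using submatrix_idx[OF one Ln(1) Kn(1)] ab Ln Kn True by simp
      also have "\<dots> = (if a = b then 1 else 0)"
        using p pick_inj_iff[of a K b] ab Kn by simp
      finally show "submatrix (1\<^sub>m n :: 'a mat) L K $$ (a,b) = (1\<^sub>m d :: 'a mat) $$ (a,b)"
        using ab by simp
    qed (use S in auto)
    then show ?thesis using True by simp
  next
    case False
    have "\<not> L \<subseteq> K"
    proof
      assume "L \<subseteq> K"
      then have "L = K" using fK Kn Ln by (intro card_subset_eq) auto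
      with False show False by simp
    qed
    then obtain l where l: "l \<in> L" "l \<notin> K" by auto
    have a: "idx L l < d" using idx_lt[OF fK(2) l(1)] Ln by simp
    have "det (submatrix (1\<^sub>m n :: 'a mat) L K) = 0"
    proof (rule det_zero_row[OF S a])
      fix b assume b: "b < d"
      have pk: "pick K b \<in> K" "pick K b < n" using pick_in[of b K] Kn b by auto
      have "submatrix (1\<^sub>m n :: 'a mat) L K $$ (idx L l, b) = (1\<^sub>m n :: 'a mat) $$ (l, pick K b)"
        using submatrix_idx[OF one Ln(1) Kn(1), of "idx L l" b] a b Ln Kn pick_idx[OF l(1)] by simp
      also have "\<dots> = 0" using pk l Ln by auto
      finally show "submatrix (1\<^sub>m n :: 'a mat) L K $$ (idx L l, b) = 0" .
    qed
    then show ?thesis using False by simp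
  qed
qed

lemma ext_act_one:
  assumes f: "f \<in> ext_pow n d"
  shows "ext_act n d (1\<^sub>m n :: 'a::field mat) f = f"
proof
  fix L
  show "ext_act n d (1\<^sub>m n) f L = f L"
  proof (cases "L \<in> DS n d")
    case False
    then have "f L = 0" using f unfolding ext_pow_def DS_def by auto
    then show ?thesis using False by (simp add: ext_act_out)
  next
    case L: True
    have "ext_act n d (1\<^sub>m n) f L = (\<Sum>K\<in>DS n d. f K * det (submatrix (1\<^sub>m n :: 'a mat) L K))"
      by (rule ext_act_at[OF _ L]) simp
    also have "\<dots> = (\<Sum>K\<in>DS n d. if L = K then f K else 0)"
      by (intro sum.cong refl) (simp add: det_sub_one[OF L])
    also have "\<dots> = f L" using L finite_DS by (simp add: sum.delta)
    finally show ?thesis .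
  qed
qed

lemma det2:
  fixes M :: "'a::comm_ring_1 mat"
  assumes M: "M \<in> carrier_mat 2 2"
  shows "det M = M$$(0,0)*M$$(1,1) - M$$(0,1)*M$$(1,0)"
proof -
  have c1: "mat_delete M 0 j \<in> carrier_mat 1 1" for j using mat_delete_carrier[OF M] by simp
  have "det M = (\<Sum>j<2. M $$ (0,j) * cofactor M 0 j)" by (rule laplace_expansion_row[OF M]) simp
  also have "\<dots> = M$$(0,0) * cofactor M 0 0 + M$$(0,1) * cofactor M 0 1" by (simp add: numeral_2_eq_2)
  finally have d: "det M = M$$(0,0) * cofactor M 0 0 + M$$(0,1) * cofactor M 0 1" .
  have e0: "cofactor M 0 0 = M$$(1,1)"
    unfolding cofactor_def using det_single[OF c1[of 0]] M by (simp add: mat_delete_def)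
  have e1: "cofactor M 0 1 = - M$$(1,0)"
    unfolding cofactor_def using det_single[OF c1[of 1]] M by (simp add: mat_delete_def)
  show ?thesis using d e0 e1 by (simp add: algebra_simps)
qed

lemma pick2:
  assumes "x < y"
  shows "pick {x,y} 0 = x" "pick {x,y} 1 = y"
proof -
  have "{z\<in>{x,y}. z < x} = {}" using assms by auto
  then have "idx {x,y} x = 0" unfolding idx_def by simp
  then show "pick {x,y} 0 = x" using pick_idx[of x "{x,y}"] by simp
  have "{z\<in>{x,y}. z < y} = {x}" using assms by auto
  then have "idx {x,y} y = 1" unfolding idx_def by simp
  then show "pick {x,y} 1 = y" using pick_idx[of y "{x,y}"] by simp
qed

lemma minor2_zero:
  fixes N :: "'a::field mat"
  assumes N: "N \<in> carrier_mat n n" and rk: "vec_space.rank n N = 1"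
    and r: "r1 < r2" "r2 < n" and c: "c1 < c2" "c2 < n"
  shows "N$$(r1,c1) * N$$(r2,c2) = N$$(r1,c2) * N$$(r2,c1)"
proof (rule ccontr)
  assume ne: "\<not> ?thesis"
  let ?S = "submatrix N {r1,r2} {c1,c2}"
  have crd: "card {r1,r2} = 2" "card {c1,c2} = 2" using r c by auto
  have sub: "{r1,r2} \<subseteq> {..<n}" "{c1,c2} \<subseteq> {..<n}" using r c by auto
  have S: "?S \<in> carrier_mat 2 2" using submatrix_carrier[OF N sub] crd by simp
  have e: "?S $$ (a,b) = N $$ (pick {r1,r2} a, pick {c1,c2} b)" if "a < 2" "b < 2" for a b
    using submatrix_idx[OF N sub, of a b] crd that by simp
  have "det ?S = N$$(r1,c1)*N$$(r2,c2) - N$$(r1,c2)*N$$(r2,c1)"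
    using det2[OF S] e[of 0 0] e[of 0 1] e[of 1 0] e[of 1 1] pick2[OF r(1)] pick2[OF c(1)] by simp
  then have "det ?S \<noteq> 0" using ne by simp
  then have "card {j. j < n \<and> j \<in> {c1,c2}} \<le> vec_space.rank n N" by (rule vec_space.rank_gt_minor[OF N])
  moreover have "{j. j < n \<and> j \<in> {c1,c2}} = {c1,c2}" using c by auto
  ultimately show False using rk crd by simp
qed

lemma minor2_all:
  fixes N :: "'a::field mat"
  assumes N: "N \<in> carrier_mat n n" and rk: "vec_space.rank n N = 1"
    and r: "r1 < n" "r2 < n" and c: "c1 < n" "c2 < n"
  shows "N$$(r1,c1) * N$$(r2,c2) = N$$(r1,c2) * N$$(r2,c1)"
proof (cases r1 r2 rule: linorder_cases)
  case less
  show ?thesis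
  proof (cases c1 c2 rule: linorder_cases)
    case less then show ?thesis using minor2_zero[OF N rk \<open>r1 < r2\<close> r(2) _ c(2)] by simp
  next
    case greater then show ?thesis using minor2_zero[OF N rk \<open>r1 < r2\<close> r(2) _ c(1), of c2] by (simp add: ac_simps)
  qed simp
next
  case greater
  show ?thesis
  proof (cases c1 c2 rule: linorder_cases)
    case less then show ?thesis using minor2_zero[OF N rk \<open>r2 < r1\<close> r(1) _ c(2), of c1] by (simp add: ac_simps)
  next
    case greater then show ?thesis using minor2_zero[OF N rk \<open>r2 < r1\<close> r(1) _ c(1), of c2] by (simp add: ac_simps)
  qed simp
qed (simp add: ac_simps)

lemma refl_struct:
  fixes s :: "'a::field mat"
  assumes R: "is_reflection n s" and V: "is_reflection_vector n s a"
  shows "\<exists>w\<in>carrier_vec n. (\<forall>v\<in>carrier_vec n. s *\<^sub>v v = v + (w \<bullet> v) \<cdot>\<^sub>v a) \<and> w \<bullet> a \<noteq> 0"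
proof -
  from R have s: "s \<in> carrier_mat n n" and dg: "diagonalizable s" and rk: "vec_space.rank n (s - 1\<^sub>m n) = 1"
    unfolding is_reflection_def by auto
  from V obtain v0 where a: "a \<in> carrier_vec n" "a \<noteq> 0\<^sub>v n" and v0: "v0 \<in> carrier_vec n" "a = (s - 1\<^sub>m n) *\<^sub>v v0"
    unfolding is_reflection_vector_def by auto
  define N where "N = s - 1\<^sub>m n"
  have N: "N \<in> carrier_mat n n" using s unfolding N_def carrier_mat_def by simp
  have aN: "a = N *\<^sub>v v0" using v0 by (simp add: N_def)
  have mn: "\<And>r1 r2 c1 c2. r1<n \<Longrightarrow> r2<n \<Longrightarrow> c1<n \<Longrightarrow> c2<n \<Longrightarrow> N$$(r1,c1) * N$$(r2,c2) = N$$(r1,c2) * N$$(r2,c1)"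
    using minor2_all[OF N] rk by (simp add: N_def)
  have "\<exists>r<n. \<exists>c<n. N$$(r,c) \<noteq> 0"
  proof (rule ccontr)
    assume "\<not> ?thesis"
    then have z: "\<And>r c. r < n \<Longrightarrow> c < n \<Longrightarrow> N$$(r,c) = 0" by auto
    have "N *\<^sub>v v0 = 0\<^sub>v n" using N v0 z by (intro eq_vecI) (auto simp: scalar_prod_def)
    then show False using a aN by simp
  qed
  then obtain r0 c0 where rc: "r0 < n" "c0 < n" "N$$(r0,c0) \<noteq> 0" by blast
  define w' where "w' = vec n (\<lambda>c. N$$(r0,c) / N$$(r0,c0))"
  have w'c: "w' \<in> carrier_vec n" by (simp add: w'_def)
  have Nrc: "N$$(r,c) = N$$(r,c0) * (w' $ c)" if "r<n" "c<n" for r c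
    using mn[of r r0 c c0] that rc by (simp add: w'_def field_simps)
  have Nv: "(N *\<^sub>v v) $ r = N$$(r,c0) * (w' \<bullet> v)" if "v \<in> carrier_vec n" "r < n" for v r
  proof -
    have "(N *\<^sub>v v) $ r = (\<Sum>c = 0..<n. N$$(r,c) * v $ c)" using N that by (simp add: scalar_prod_def)
    also have "\<dots> = (\<Sum>c = 0..<n. N$$(r,c0) * (w' $ c * v $ c))"
      by (rule sum.cong[OF refl]) (use Nrc that in \<open>simp add: mult.assoc\<close>)
    also have "\<dots> = N$$(r,c0) * (w' \<bullet> v)" using that w'c by (simp add: scalar_prod_def sum_distrib_left)
    finally show ?thesis .
  qed
  define l0 where "l0 = w' \<bullet> v0"
  have ar: "a $ r = N$$(r,c0) * l0" if "r < n" for r using Nv[OF v0(1) that] aN l0_def by simp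
  have l0: "l0 \<noteq> 0"
  proof
    assume "l0 = 0"
    then have "a = 0\<^sub>v n" using a ar by (intro eq_vecI) auto
    then show False using a by simp
  qed
  define w where "w = (1/l0) \<cdot>\<^sub>v w'"
  have wc: "w \<in> carrier_vec n" using w'c by (simp add: w_def)
  have Nent: "N$$(r,c) = a $ r * w $ c" if "r<n" "c<n" for r c
    using Nrc[OF that] ar[OF that(1)] l0 that w'c by (simp add: w_def)
  have sv: "s *\<^sub>v v = v + (w \<bullet> v) \<cdot>\<^sub>v a" if v: "v \<in> carrier_vec n" for v
  proof (rule eq_vecI)
    fix r assume "r < dim_vec (v + (w \<bullet> v) \<cdot>\<^sub>v a)"
    then have r: "r < n" using v a by simp
    have sN: "s = N + 1\<^sub>m n" unfolding N_def using s by (intro eq_matI) auto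
    have "(s *\<^sub>v v) $ r = ((N + 1\<^sub>m n) *\<^sub>v v) $ r" using sN by simp
    also have "\<dots> = (N *\<^sub>v v) $ r + v $ r" using N v r by (simp add: add_mult_distrib_mat_vec)
    also have "(N *\<^sub>v v) $ r = N$$(r,c0) * (w' \<bullet> v)" by (rule Nv[OF v r])
    also have "N$$(r,c0) * (w' \<bullet> v) = (w \<bullet> v) * a $ r"
      using ar[OF r] l0 v w'c by (simp add: w_def)
    finally show "(s *\<^sub>v v) $ r = (v + (w \<bullet> v) \<cdot>\<^sub>v a) $ r" using r v a by simp
  qed (use s v a in simp)
  have wa: "w \<bullet> a \<noteq> 0"
  proof
    assume wa0: "w \<bullet> a = 0"
    have NN: "N * N = 0\<^sub>m n n"
    proof (rule eq_matI)
      fix r c assume rc': "r < dim_row (0\<^sub>m n n :: 'a mat)" "c < dim_col (0\<^sub>m n n :: 'a mat)"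
      then have r: "r < n" "c < n" by auto
      have "(N * N) $$ (r,c) = (\<Sum>k = 0..<n. N$$(r,k) * N$$(k,c))" using N r by (simp add: scalar_prod_def)
      also have "\<dots> = (\<Sum>k = 0..<n. (a $ r * w $ c) * (w $ k * a $ k))"
        by (rule sum.cong[OF refl]) (simp add: Nent r ac_simps)
      also have "\<dots> = (a $ r * w $ c) * (w \<bullet> a)" using wc a by (simp add: scalar_prod_def sum_distrib_left)
      finally show "(N * N) $$ (r,c) = (0\<^sub>m n n :: 'a mat) $$ (r,c)" using wa0 r by simp
    qed (use N in auto)
    from dg obtain D where D: "diagonal_mat D" "similar_mat s D" unfolding diagonalizable_def by auto
    from similar_matD[OF D(2)] obtain m P Q where
      PQ: "{s, D, P, Q} \<subseteq> carrier_mat m m" "P * Q = 1\<^sub>m m" "Q * P = 1\<^sub>m m" "s = P * D * Q" by blast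
    have mn': "m = n" using PQ(1) s by auto
    have P: "P \<in> carrier_mat n n" and Q: "Q \<in> carrier_mat n n" and Dc: "D \<in> carrier_mat n n"
      using PQ(1) mn' by auto
    have PQ1: "P * Q = 1\<^sub>m n" and QP1: "Q * P = 1\<^sub>m n" using PQ mn' by auto
    have QsP: "Q * s * P = D"
    proof -
      have "Q * s * P = Q * (P * D * Q) * P" using PQ(4) by simp
      also have "\<dots> = (Q * P) * D * (Q * P)"
        using P Q Dc by (simp add: assoc_mult_mat[of _ n n _ n _ n])
      also have "\<dots> = D" using QP1 Dc by simp
      finally show ?thesis .
    qed
    define E where "E = D - 1\<^sub>m n"
    have Ec: "E \<in> carrier_mat n n" using Dc unfolding E_def carrier_mat_def by simp
    have QNP: "Q * N * P = E"
    proof -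
      have "Q * N = Q * s - Q" using Q s by (simp add: N_def mult_minus_distrib_mat)
      then have "Q * N * P = (Q * s - Q) * P" by simp
      also have "\<dots> = Q * s * P - Q * P"
        by (rule minus_mult_distrib_mat[of "Q*s" n n Q P n]) (use Q s P in auto)
      also have "\<dots> = E" using QsP QP1 by (simp add: E_def)
      finally show ?thesis .
    qed
    have EE: "E * E = 0\<^sub>m n n"
    proof -
      have "E * E = (Q * N * P) * (Q * N * P)" using QNP by simp
      also have "\<dots> = Q * N * (P * Q) * N * P"
        using P Q N by (simp add: assoc_mult_mat[of _ n n _ n _ n])
      also have "\<dots> = Q * (N * N) * P"
        using P Q N PQ1 by (simp add: assoc_mult_mat[of _ n n _ n _ n])
      also have "\<dots> = 0\<^sub>m n n" using NN P Q by simp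
      finally show ?thesis .
    qed
    have Ediag: "E $$ (i,j) = 0" if "i < n" "j < n" "i \<noteq> j" for i j
      using D(1) Dc that unfolding diagonal_mat_def by (simp add: E_def)
    have Ezero: "E $$ (j,j) = 0" if j: "j < n" for j
    proof -
      have "(E * E) $$ (j,j) = (\<Sum>k = 0..<n. E$$(j,k) * E$$(k,j))" using Ec j by (simp add: scalar_prod_def)
      also have "\<dots> = E$$(j,j) * E$$(j,j)"
        using j Ediag by (subst sum.remove[of _ j]) (auto intro!: sum.neutral)
      finally have "E$$(j,j) * E$$(j,j) = 0" using EE j by simp
      then show ?thesis by simp
    qed
    have "D = 1\<^sub>m n"
    proof (rule eq_matI)
      fix i j assume "i < dim_row (1\<^sub>m n :: 'a mat)" "j < dim_col (1\<^sub>m n :: 'a mat)"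
      then have ij: "i < n" "j < n" by auto
      then have "E $$ (i,j) = 0" using Ediag Ezero by (cases "i = j") auto
      then show "D $$ (i,j) = (1\<^sub>m n :: 'a mat) $$ (i,j)" using ij Dc by (simp add: E_def)
    qed (use Dc in auto)
    then have "s = 1\<^sub>m n" using PQ(4) P PQ1 by simp
    then have "N = 0\<^sub>m n n" by (simp add: N_def)
    then have "N *\<^sub>v v0 = 0\<^sub>v n" using v0 by (intro eq_vecI) (auto simp: scalar_prod_def)
    then show False using a aN by simp
  qed
  show ?thesis using sv wa wc by blast
qed

lemma basis_invertible:
  fixes \<alpha> :: "nat \<Rightarrow> 'a::field vec"
  assumes B: "vec_basis n (\<alpha> ` {..<n})" and car: "\<And>i. i < n \<Longrightarrow> \<alpha> i \<in> carrier_vec n"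
  shows "\<exists>Bm \<in> carrier_mat n n. mat_of_cols n (map \<alpha> [0..<n]) * Bm = 1\<^sub>m n
            \<and> Bm * mat_of_cols n (map \<alpha> [0..<n]) = 1\<^sub>m n"
proof -
  let ?A = "mat_of_cols n (map \<alpha> [0..<n])"
  let ?S = "\<alpha> ` {..<n}"
  have A: "?A \<in> carrier_mat n n" by (metis mat_of_cols_carrier(1) length_map length_upt diff_zero)
  have sub: "set (map \<alpha> [0..<n]) \<subseteq> carrier_vec n" using car by auto
  have cols: "set (cols ?A) = ?S" using cols_mat_of_cols[OF sub] by auto
  have vs: "vectorspace class_ring (module_vec TYPE('a) n)" by (rule vec_vs)
  have bas: "vectorspace.basis class_ring (module_vec TYPE('a) n) ?S" using B unfolding vec_basis_def .
  then have li: "\<not> module.lin_dep class_ring (module_vec TYPE('a) n) ?S"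
    using vectorspace.basis_def[OF vs] by blast
  have fin: "finite ?S" by simp
  have "vectorspace.dim class_ring (module_vec TYPE('a) n) = card ?S"
    by (rule vectorspace.dim_basis[OF vs fin bas])
  then have cS: "card ?S = n" using vec_space.dim_is_n by metis
  have max: "maximal ?S (\<lambda>T. T \<subseteq> set (cols ?A) \<and> \<not> module.lin_dep class_ring (module_vec TYPE('a) n) T)"
    unfolding maximal_def cols using li by auto
  have "vec_space.rank n ?A = card ?S" by (rule vec_space.rank_card_indpt[OF A max])
  then have "vec_space.rank n ?A = n" using cS by simp
  then have "det ?A \<noteq> 0" using vec_space.det_rank_iff[OF A] by simp
  then have "?A \<in> Units (ring_mat TYPE('a) n undefined)" by (rule det_non_zero_imp_unit[OF A])
  then show ?thesis unfolding Units_def ring_mat_simps by auto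
qed

definition linop :: "nat \<Rightarrow> nat \<Rightarrow> ((nat set \<Rightarrow> 'a::field) \<Rightarrow> (nat set \<Rightarrow> 'a)) \<Rightarrow> bool" where
  "linop n d \<Phi> \<longleftrightarrow> (\<forall>f\<in>ext_pow n d. \<Phi> f \<in> ext_pow n d)
     \<and> (\<forall>f\<in>ext_pow n d. \<forall>g\<in>ext_pow n d. \<Phi> (\<lambda>K. f K + g K) = (\<lambda>K. \<Phi> f K + \<Phi> g K))
     \<and> (\<forall>c. \<forall>f\<in>ext_pow n d. \<Phi> (\<lambda>K. c * f K) = (\<lambda>K. c * \<Phi> f K))"

lemma linop_act: "linop n d (ext_act n d g)"
  unfolding linop_def using ext_act_pow ext_act_add ext_act_smult by blast

lemma linop_endo: "ext_endo n d k s \<phi> \<Longrightarrow> linop n d \<phi>"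
  unfolding linop_def ext_endo_def by blast

lemma linop_comp:
  fixes \<Phi> \<Psi> :: "(nat set \<Rightarrow> 'a::field) \<Rightarrow> (nat set \<Rightarrow> 'a)"
  assumes P: "linop n d \<Phi>" and Q: "linop n d \<Psi>"
  shows "linop n d (\<lambda>f. \<Phi> (\<Psi> f))"
  unfolding linop_def
proof (intro conjI ballI allI)
  fix f :: "nat set \<Rightarrow> 'a" assume f: "f \<in> ext_pow n d"
  then have "\<Psi> f \<in> ext_pow n d" using Q unfolding linop_def by blast
  then show "\<Phi> (\<Psi> f) \<in> ext_pow n d" using P unfolding linop_def by blast
next
  fix f g :: "nat set \<Rightarrow> 'a" assume f: "f \<in> ext_pow n d" and g: "g \<in> ext_pow n d"
  have "\<Psi> f \<in> ext_pow n d" "\<Psi> g \<in> ext_pow n d" using Q f g unfolding linop_def by blast+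
  moreover have "\<Psi> (\<lambda>K. f K + g K) = (\<lambda>K. \<Psi> f K + \<Psi> g K)" using Q f g unfolding linop_def by blast
  ultimately show "\<Phi> (\<Psi> (\<lambda>K. f K + g K)) = (\<lambda>K. \<Phi> (\<Psi> f) K + \<Phi> (\<Psi> g) K)"
    using P unfolding linop_def by simp
next
  fix c and f :: "nat set \<Rightarrow> 'a" assume f: "f \<in> ext_pow n d"
  have "\<Psi> f \<in> ext_pow n d" using Q f unfolding linop_def by blast
  moreover have "\<Psi> (\<lambda>K. c * f K) = (\<lambda>K. c * \<Psi> f K)" using Q f unfolding linop_def by blast
  ultimately show "\<Phi> (\<Psi> (\<lambda>K. c * f K)) = (\<lambda>K. c * \<Phi> (\<Psi> f) K)"
    using P unfolding linop_def by simp
qed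

lemma linop_pow: "linop n d \<Phi> \<Longrightarrow> f \<in> ext_pow n d \<Longrightarrow> \<Phi> f \<in> ext_pow n d"
  unfolding linop_def by blast

lemma linop_smult: "linop n d \<Phi> \<Longrightarrow> f \<in> ext_pow n d \<Longrightarrow> \<Phi> (\<lambda>K. c * f K) = (\<lambda>K. c * \<Phi> f K)"
  unfolding linop_def by blast

lemma linop_add: "linop n d \<Phi> \<Longrightarrow> f \<in> ext_pow n d \<Longrightarrow> g \<in> ext_pow n d \<Longrightarrow>
   \<Phi> (\<lambda>K. f K + g K) = (\<lambda>K. \<Phi> f K + \<Phi> g K)"
  unfolding linop_def by blast

lemma pow_zero: "(\<lambda>K. 0) \<in> ext_pow n d" unfolding ext_pow_def by simp

lemma pow_add:
  assumes f: "f \<in> ext_pow n d" and g: "g \<in> ext_pow n d"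
  shows "(\<lambda>K. f K + g K) \<in> ext_pow n d"
  unfolding ext_pow_def
proof (intro CollectI allI impI)
  fix K assume "f K + g K \<noteq> 0"
  then have "f K \<noteq> 0 \<or> g K \<noteq> 0" by auto
  then show "K \<subseteq> {..<n} \<and> card K = d" using f g unfolding ext_pow_def by blast
qed

lemma pow_smult: "f \<in> ext_pow n d \<Longrightarrow> (\<lambda>K. c * f K) \<in> ext_pow n d"
  unfolding ext_pow_def by auto

lemma pow_delta: "J \<in> DS n d \<Longrightarrow> delta J \<in> ext_pow n d"
  unfolding ext_pow_def delta_def DS_def by auto

lemma linop_zero:
  assumes P: "linop n d \<Phi>" shows "\<Phi> (\<lambda>K. 0) = (\<lambda>K. 0)"
proof -
  have "\<Phi> (\<lambda>K. 0 * (0::'a)) = (\<lambda>K. 0 * \<Phi> (\<lambda>K. 0) K)"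
    using linop_smult[OF P pow_zero, of 0] by simp
  then show ?thesis by simp
qed

lemma linop_sum:
  assumes P: "linop n d \<Phi>" and S: "finite S"
  shows "(\<forall>x\<in>S. F x \<in> ext_pow n d) \<Longrightarrow>
    \<Phi> (\<lambda>K. \<Sum>x\<in>S. c x * F x K) = (\<lambda>K. \<Sum>x\<in>S. c x * \<Phi> (F x) K)"
  using S
proof (induction S rule: finite_induct)
  case empty
  then show ?case using linop_zero[OF P] by simp
next
  case (insert x S)
  have Fx: "F x \<in> ext_pow n d" using insert by simp
  have FS: "\<forall>y\<in>S. F y \<in> ext_pow n d" using insert by simp
  have pS: "(\<lambda>K. \<Sum>y\<in>S. c y * F y K) \<in> ext_pow n d"
    unfolding ext_pow_def
  proof (intro CollectI allI impI)
    fix K assume "(\<Sum>y\<in>S. c y * F y K) \<noteq> 0"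
    then obtain y where "y \<in> S" "c y * F y K \<noteq> 0" by (meson sum.neutral)
    then have "F y K \<noteq> 0" by auto
    then show "K \<subseteq> {..<n} \<and> card K = d" using FS \<open>y \<in> S\<close> unfolding ext_pow_def by auto
  qed
  have "\<Phi> (\<lambda>K. \<Sum>y\<in>insert x S. c y * F y K) = \<Phi> (\<lambda>K. c x * F x K + (\<Sum>y\<in>S. c y * F y K))"
    using insert by simp
  also have "\<dots> = (\<lambda>K. \<Phi> (\<lambda>K. c x * F x K) K + \<Phi> (\<lambda>K. \<Sum>y\<in>S. c y * F y K) K)"
    using linop_add[OF P pow_smult[OF Fx] pS] by simp
  also have "\<dots> = (\<lambda>K. c x * \<Phi> (F x) K + (\<Sum>y\<in>S. c y * \<Phi> (F y) K))"
    using linop_smult[OF P Fx] insert.IH[OF FS] by simp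
  also have "\<dots> = (\<lambda>K. \<Sum>y\<in>insert x S. c y * \<Phi> (F y) K)"
    using insert by simp
  finally show ?case .
qed

lemma decomp:
  assumes f: "f \<in> ext_pow n d"
  shows "f = (\<lambda>K. \<Sum>L\<in>DS n d. f L * delta L K)"
proof
  fix K
  show "f K = (\<Sum>L\<in>DS n d. f L * delta L K)"
  proof (cases "K \<in> DS n d")
    case True
    have "(\<Sum>L\<in>DS n d. f L * delta L K) = (\<Sum>L\<in>DS n d. if K = L then f L else 0)"
      by (intro sum.cong refl) (auto simp: delta_def)
    also have "\<dots> = f K" using True finite_DS by simp
    finally show ?thesis by simp
  next
    case False
    then have "f K = 0" using f unfolding ext_pow_def DS_def by auto
    moreover have "(\<Sum>L\<in>DS n d. f L * delta L K) = 0"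
      using False by (intro sum.neutral) (auto simp: delta_def)
    ultimately show ?thesis by simp
  qed
qed

definition idrow :: "nat \<Rightarrow> nat \<Rightarrow> 'a::field mat \<Rightarrow> bool" where
  "idrow n r t \<longleftrightarrow> t \<in> carrier_mat n n \<and> r < n \<and>
     (\<forall>l<n. \<forall>m<n. l \<noteq> r \<longrightarrow> t $$ (l,m) = (if l = m then 1 else 0))"

lemma idrow_fix:
  assumes t: "idrow n r t" and L: "L \<in> DS n d" and rL: "r \<notin> L" and f: "f \<in> ext_pow n d"
  shows "ext_act n d t f L = f L"
proof -
  have tc: "t \<in> carrier_mat n n" using t unfolding idrow_def by simp
  have Ln: "L \<subseteq> {..<n}" "card L = d" using L by (auto simp: DS_def)
  have one: "(1\<^sub>m n :: 'a mat) \<in> carrier_mat n n" by simp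
  have eq: "submatrix t L K = submatrix (1\<^sub>m n) L K" if K: "K \<in> DS n d" for K
  proof -
    have Kn: "K \<subseteq> {..<n}" "card K = d" using K by (auto simp: DS_def)
    have S1: "submatrix t L K \<in> carrier_mat d d" using submatrix_carrier[OF tc Ln(1) Kn(1)] Ln Kn by simp
    have S2: "submatrix (1\<^sub>m n :: 'a mat) L K \<in> carrier_mat d d"
      using submatrix_carrier[OF one Ln(1) Kn(1)] Ln Kn by simp
    show ?thesis
    proof (rule eq_matI)
      fix a b assume "a < dim_row (submatrix (1\<^sub>m n :: 'a mat) L K)" "b < dim_col (submatrix (1\<^sub>m n :: 'a mat) L K)"
      then have ab: "a < d" "b < d" using S2 by auto
      have pa: "pick L a \<in> L" "pick K b \<in> K" using pick_in[of a L] pick_in[of b K] ab Ln Kn by auto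
      then have pn: "pick L a < n" "pick K b < n" "pick L a \<noteq> r" using Ln Kn rL by auto
      have "submatrix t L K $$ (a,b) = t $$ (pick L a, pick K b)"
        using submatrix_idx[OF tc Ln(1) Kn(1)] ab Ln Kn by simp
      also have "\<dots> = (if pick L a = pick K b then 1 else 0)" using t pn unfolding idrow_def by simp
      also have "\<dots> = submatrix (1\<^sub>m n :: 'a mat) L K $$ (a,b)"
        using submatrix_idx[OF one Ln(1) Kn(1)] ab Ln Kn pn by simp
      finally show "submatrix t L K $$ (a,b) = submatrix (1\<^sub>m n :: 'a mat) L K $$ (a,b)" .
    qed (use S1 S2 in auto)
  qed
  have "ext_act n d t f L = (\<Sum>K\<in>DS n d. f K * det (submatrix t L K))" by (rule ext_act_at[OF tc L])
  also have "\<dots> = (\<Sum>K\<in>DS n d. if L = K then f K else 0)"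
    by (intro sum.cong refl) (simp add: eq det_sub_one[OF L])
  also have "\<dots> = f L" using L finite_DS by (simp add: sum.delta)
  finally show ?thesis .
qed

lemma idrow_eig:
  assumes t: "idrow n r t" and J: "J \<in> DS n d" and rJ: "r \<in> J"
  shows "ext_act n d t (delta J) = (\<lambda>K. t $$ (r,r) * delta J K)"
proof
  fix L
  have tc: "t \<in> carrier_mat n n" and rn: "r < n" using t unfolding idrow_def by auto
  have tI: "\<And>l m. l < n \<Longrightarrow> m < n \<Longrightarrow> l \<noteq> r \<Longrightarrow> t $$ (l,m) = (if l = m then 1 else 0)"
    using t unfolding idrow_def by auto
  have Jn: "J \<subseteq> {..<n}" "card J = d" using J by (auto simp: DS_def)
  have fJ: "finite J" using J by (rule DS_finite)
  have eL: "ext_act n d t (delta J) L = wedge n (map (col t) (sorted_list_of_set J)) L"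
    by (simp add: ext_act_delta[OF J])
  show "ext_act n d t (delta J) L = t $$ (r,r) * delta J L"
  proof (cases "L \<in> DS n d")
    case False
    then have "L \<noteq> J" using J by auto
    then show ?thesis using eL wedge_len_zero[OF len_cols[OF J] False] by (simp add: delta_def)
  next
    case L: True
    have Ln: "L \<subseteq> {..<n}" "card L = d" using L by (auto simp: DS_def)
    have S: "submatrix t L J \<in> carrier_mat d d" using submatrix_carrier[OF tc Ln(1) Jn(1)] Ln Jn by simp
    have w: "ext_act n d t (delta J) L = det (submatrix t L J)" using eL wedge_col[OF tc J L] by simp
    show ?thesis
    proof (cases "L = J")
      case True
      let ?r = "idx J r"
      have rr: "?r < d" using idx_lt[OF fJ rJ] Jn by simp
      have pr: "pick J ?r = r" by (rule pick_idx[OF rJ])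
      have "det (submatrix t L J) = of_int (sign (id :: nat \<Rightarrow> nat)) * submatrix t L J $$ (?r, id ?r)"
      proof (rule det_single_perm[OF S _ rr])
        show "id permutes {0..<d}" by (rule permutes_id)
        fix a b assume ab: "a < d" "b < d" "a \<noteq> ?r"
        have pa: "pick J a \<in> J" "pick J b \<in> J" using pick_in[of a J] pick_in[of b J] ab Jn by auto
        then have pn: "pick J a < n" "pick J b < n" using Jn by auto
        have par: "pick J a \<noteq> r" using ab pick_inj_iff[of a J ?r] pr rr Jn by auto
        have e: "submatrix t L J $$ (a,b) = t $$ (pick J a, pick J b)"
          using submatrix_idx[OF tc Ln(1) Jn(1)] ab Ln Jn True by simp
        show "b \<noteq> id a \<Longrightarrow> submatrix t L J $$ (a,b) = 0"
          using e tI[OF pn par] pick_inj_iff[of a J b] ab Jn by auto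
        show "submatrix t L J $$ (a, id a) = 1"
          using submatrix_idx[OF tc Ln(1) Jn(1)] ab Ln Jn True tI[OF pn(1) pn(1) par] by simp
      qed
      also have "\<dots> = t $$ (r,r)"
        using submatrix_idx[OF tc Ln(1) Jn(1)] rr Ln Jn True pr by simp
      finally show ?thesis using w True by (simp add: delta_def)
    next
      case False
      have "\<not> L \<subseteq> J"
      proof
        assume "L \<subseteq> J"
        then have "L = J" using fJ Jn Ln by (intro card_subset_eq) auto
        with False show False by simp
      qed
      then obtain l where l: "l \<in> L" "l \<notin> J" by auto
      have fL: "finite L" using L by (rule DS_finite)
      have a: "idx L l < d" using idx_lt[OF fL l(1)] Ln by simp
      have lr: "l \<noteq> r" using l rJ by auto
      have "det (submatrix t L J) = 0"
      proof (rule det_zero_row[OF S a])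
        fix b assume b: "b < d"
        have pk: "pick J b \<in> J" "pick J b < n" using pick_in[of b J] Jn b by auto
        have ln: "l < n" using l Ln by auto
        have "submatrix t L J $$ (idx L l, b) = t $$ (l, pick J b)"
          using submatrix_idx[OF tc Ln(1) Jn(1), of "idx L l" b] a b Ln Jn pick_idx[OF l(1)] by simp
        also have "\<dots> = 0" using tI[OF ln pk(2) lr] pk l by auto
        finally show "submatrix t L J $$ (idx L l, b) = 0" .
      qed
      then show ?thesis using w False by (simp add: delta_def)
    qed
  qed
qed

lemma idrow_key:
  assumes t: "idrow n r t" and X: "X \<in> DS n d" and xX: "x \<in> X" and rX: "r \<notin> X"
    and tx: "t $$ (r,x) \<noteq> 0"
  shows "insert r (X - {x}) \<in> DS n d \<and> ext_act n d t (delta X) (insert r (X - {x})) \<noteq> 0"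
proof -
  let ?Y = "insert r (X - {x})"
  have tc: "t \<in> carrier_mat n n" and rn: "r < n" using t unfolding idrow_def by auto
  have tI: "\<And>l m. l < n \<Longrightarrow> m < n \<Longrightarrow> l \<noteq> r \<Longrightarrow> t $$ (l,m) = (if l = m then 1 else 0)"
    using t unfolding idrow_def by auto
  have Xn: "X \<subseteq> {..<n}" "card X = d" using X by (auto simp: DS_def)
  have fX: "finite X" using X by (rule DS_finite)
  have Yn: "?Y \<subseteq> {..<n}" using Xn rn by auto
  have cX: "card X > 0" using fX xX by (auto simp: card_gt_0_iff)
  have "card ?Y = Suc (card (X - {x}))" using fX rX by (simp add: card_insert_if)
  also have "card (X - {x}) = card X - 1" using xX fX by (simp add: card_Diff_singleton)
  finally have cY: "card ?Y = d" using cX Xn by simp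
  have Y: "?Y \<in> DS n d" using Yn cY by (simp add: DS_def)
  have fY: "finite ?Y" using fX by simp
  have S: "submatrix t ?Y X \<in> carrier_mat d d" using submatrix_carrier[OF tc Yn Xn(1)] cY Xn by simp
  have w: "ext_act n d t (delta X) ?Y = det (submatrix t ?Y X)"
    by (simp add: ext_act_delta[OF X] wedge_col[OF tc X Y])
  define h where "h y = (if y = r then x else y)" for y
  have hX: "h y \<in> X" if "y \<in> ?Y" for y using that xX by (auto simp: h_def)
  have hinj: "h y1 = h y2 \<Longrightarrow> y1 \<in> ?Y \<Longrightarrow> y2 \<in> ?Y \<Longrightarrow> y1 = y2" for y1 y2
    using rX xX by (auto simp: h_def split: if_splits)
  have pY: "pick ?Y a \<in> ?Y" if "a < d" for a using pick_in[of a ?Y] that cY by simp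
  define \<sigma> where "\<sigma> a = (if a < d then idx X (h (pick ?Y a)) else a)" for a
  have sinj: "inj_on \<sigma> {0..<d}"
  proof (rule inj_onI)
    fix a b assume ab: "a \<in> {0..<d}" "b \<in> {0..<d}" "\<sigma> a = \<sigma> b"
    then have "idx X (h (pick ?Y a)) = idx X (h (pick ?Y b))" by (simp add: \<sigma>_def)
    then have "h (pick ?Y a) = h (pick ?Y b)" using idx_inj[OF hX[OF pY] hX[OF pY]] ab by simp
    then have "pick ?Y a = pick ?Y b" using hinj pY ab by simp
    then show "a = b" using pick_inj_iff[of a ?Y b] ab cY by simp
  qed
  have ssub: "\<sigma> ` {0..<d} \<subseteq> {0..<d}" using idx_lt[OF fX hX[OF pY]] Xn by (auto simp: \<sigma>_def)
  have "card (\<sigma> ` {0..<d}) = card {0..<d}" using sinj by (simp add: card_image)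
  then have "\<sigma> ` {0..<d} = {0..<d}" using ssub by (intro card_subset_eq) auto
  then have "bij_betw \<sigma> {0..<d} {0..<d}" using sinj by (simp add: bij_betw_def)
  then have sp: "\<sigma> permutes {0..<d}" by (rule bij_imp_permutes) (simp add: \<sigma>_def)
  let ?rr = "idx ?Y r"
  have rr: "?rr < d" using idx_lt[OF fY, of r] cY by simp
  have prr: "pick ?Y ?rr = r" by (rule pick_idx) simp
  have "det (submatrix t ?Y X) = of_int (sign \<sigma>) * submatrix t ?Y X $$ (?rr, \<sigma> ?rr)"
  proof (rule det_single_perm[OF S sp rr])
    fix a assume a: "a < d" "a \<noteq> ?rr"
    have par: "pick ?Y a \<noteq> r" using a pick_inj_iff[of a ?Y ?rr] prr rr cY by auto
    have paX: "pick ?Y a \<in> X" using pY[OF a(1)] par by auto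
    have pan: "pick ?Y a < n" using paX Xn by auto
    have sa: "\<sigma> a = idx X (pick ?Y a)" using a par by (simp add: \<sigma>_def h_def)
    have sad: "\<sigma> a < d" using idx_lt[OF fX paX] Xn sa by simp
    {
      fix b assume b: "b < d" "b \<noteq> \<sigma> a"
      have pb: "pick X b \<in> X" using pick_in[of b X] b Xn by simp
      have pbn: "pick X b < n" using pb Xn by auto
      have ne: "pick X b \<noteq> pick ?Y a" using b sa idx_pick[of b X] Xn by auto
      have "submatrix t ?Y X $$ (a,b) = t $$ (pick ?Y a, pick X b)"
        using submatrix_idx[OF tc Yn Xn(1)] a b cY Xn by simp
      also have "\<dots> = 0" using tI[OF pan pbn par] ne by simp
      finally show "submatrix t ?Y X $$ (a,b) = 0" .
    }
    have "submatrix t ?Y X $$ (a, \<sigma> a) = t $$ (pick ?Y a, pick X (\<sigma> a))"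
      using submatrix_idx[OF tc Yn Xn(1)] a sad cY Xn by simp
    also have "pick X (\<sigma> a) = pick ?Y a" using sa pick_idx[OF paX] by simp
    then have "t $$ (pick ?Y a, pick X (\<sigma> a)) = 1" using tI[OF pan pan par] by simp
    finally show "submatrix t ?Y X $$ (a, \<sigma> a) = 1" .
  qed
  moreover have "\<sigma> ?rr = idx X x" using rr prr by (simp add: \<sigma>_def h_def)
  moreover have "submatrix t ?Y X $$ (?rr, idx X x) = t $$ (r, x)"
    using submatrix_idx[OF tc Yn Xn(1), of ?rr "idx X x"] rr idx_lt[OF fX xX] cY Xn prr pick_idx[OF xX] by simp
  moreover have "(of_int (sign \<sigma>) :: 'a) \<noteq> 0" by (simp add: sign_def)
  ultimately have "det (submatrix t ?Y X) \<noteq> 0" using tx by simp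
  then show ?thesis using Y w by simp
qed

theorem lemma4p3:
  fixes n k d :: nat
    and s :: "nat \<Rightarrow> 'a::field_char_0 mat"
    and \<alpha> :: "nat \<Rightarrow> 'a vec"
    and \<phi> :: "(nat set \<Rightarrow> 'a) \<Rightarrow> (nat set \<Rightarrow> 'a)"
  assumes refl: "\<forall>i<k. is_reflection n (s i) \<and> invertible_mat (s i)"
    and rvec: "\<forall>i<k. is_reflection_vector n (s i) (\<alpha> i)"
    and irr: "irreducible_rep n k s"
    and nk: "n \<le> k"
    and conn: "weakly_connected s \<alpha> {..<n}"
    and basis: "vec_basis n (\<alpha> ` {..<n})"
    and dn: "d \<le> n"
    and endo: "ext_endo n d k s \<phi>"
  shows "\<exists>\<gamma> :: nat set \<Rightarrow> 'a.
     (\<forall>J. J \<subseteq> {..<n} \<and> card J = d \<longrightarrow>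
        \<phi> (wedge n (map \<alpha> (sorted_list_of_set J)))
          = (\<lambda>K. \<gamma> J * wedge n (map \<alpha> (sorted_list_of_set J)) K))
   \<and> (\<forall>J J'. J \<subseteq> {..<n} \<and> card J = d \<and> J' \<subseteq> {..<n} \<and> card J' = d
        \<and> is_move s \<alpha> {..<n} J J' \<longrightarrow> \<gamma> J = \<gamma> J')"
proof -
  have ik: "\<And>i. i < n \<Longrightarrow> i < k" using nk by simp
  have acar: "\<And>i. i < n \<Longrightarrow> \<alpha> i \<in> carrier_vec n"
    using rvec ik unfolding is_reflection_vector_def by blast
  have sc: "\<And>i. i < n \<Longrightarrow> s i \<in> carrier_mat n n"
    using refl ik unfolding is_reflection_def by blast
  define A where "A = mat_of_cols n (map \<alpha> [0..<n])"
  have Ac: "A \<in> carrier_mat n n" unfolding A_def by (metis mat_of_cols_carrier(1) length_map length_upt diff_zero)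
  have colA: "col A j = \<alpha> j" if j: "j < n" for j
  proof -
    have "col A j = map \<alpha> [0..<n] ! j" unfolding A_def by (rule col_mat_of_cols) (use j acar in auto)
    then show ?thesis using j by simp
  qed
  obtain B where Bc: "B \<in> carrier_mat n n" and AB: "A * B = 1\<^sub>m n" and BA: "B * A = 1\<^sub>m n"
    using basis_invertible[OF basis acar] unfolding A_def by blast
  have Ba: "B *\<^sub>v \<alpha> j = unit_vec n j" if j: "j < n" for j
  proof -
    have "col (B * A) j = B *\<^sub>v col A j" by (rule col_mult2[OF Bc Ac j])
    then show ?thesis using BA colA[OF j] col_one[OF j] by metis
  qed
  have "\<forall>i. \<exists>w. i < n \<longrightarrow> (w \<in> carrier_vec n \<and> (\<forall>v\<in>carrier_vec n. s i *\<^sub>v v = v + (w \<bullet> v) \<cdot>\<^sub>v \<alpha> i) \<and> w \<bullet> \<alpha> i \<noteq> 0)"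
  proof (intro allI)
    fix i
    show "\<exists>w. i < n \<longrightarrow> (w \<in> carrier_vec n \<and> (\<forall>v\<in>carrier_vec n. s i *\<^sub>v v = v + (w \<bullet> v) \<cdot>\<^sub>v \<alpha> i) \<and> w \<bullet> \<alpha> i \<noteq> 0)"
    proof (cases "i < n")
      case True
      have "is_reflection n (s i)" "is_reflection_vector n (s i) (\<alpha> i)" using refl rvec ik[OF True] by auto
      from refl_struct[OF this] show ?thesis by blast
    qed simp
  qed
  then obtain wv where wv: "\<And>i. i < n \<Longrightarrow> wv i \<in> carrier_vec n \<and> (\<forall>v\<in>carrier_vec n. s i *\<^sub>v v = v + (wv i \<bullet> v) \<cdot>\<^sub>v \<alpha> i) \<and> wv i \<bullet> \<alpha> i \<noteq> 0"
    by metis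
  define t where "t i = B * s i * A" for i
  have tc: "t i \<in> carrier_mat n n" if "i < n" for i using Bc sc[OF that] Ac by (simp add: t_def)
  have tent: "t i $$ (l,m) = (if l = m then 1 else 0) + (if l = i then wv i \<bullet> \<alpha> m else 0)"
    if i: "i < n" and l: "l < n" and m: "m < n" for i l m
  proof -
    have Bs: "B * s i \<in> carrier_mat n n" using Bc sc[OF i] by simp
    have "col (t i) m = (B * s i) *\<^sub>v col A m" unfolding t_def by (rule col_mult2[OF Bs Ac m])
    also have "\<dots> = B *\<^sub>v (s i *\<^sub>v \<alpha> m)" using colA[OF m] Bc sc[OF i] acar[OF m] by simp
    also have "s i *\<^sub>v \<alpha> m = \<alpha> m + (wv i \<bullet> \<alpha> m) \<cdot>\<^sub>v \<alpha> i" using wv[OF i] acar[OF m] by blast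
    also have "B *\<^sub>v (\<alpha> m + (wv i \<bullet> \<alpha> m) \<cdot>\<^sub>v \<alpha> i) = B *\<^sub>v \<alpha> m + (wv i \<bullet> \<alpha> m) \<cdot>\<^sub>v (B *\<^sub>v \<alpha> i)"
      using Bc acar[OF m] acar[OF i] by (simp add: mult_add_distrib_mat_vec mult_mat_vec)
    also have "\<dots> = unit_vec n m + (wv i \<bullet> \<alpha> m) \<cdot>\<^sub>v unit_vec n i" using Ba[OF m] Ba[OF i] by simp
    finally have c: "col (t i) m = unit_vec n m + (wv i \<bullet> \<alpha> m) \<cdot>\<^sub>v unit_vec n i" .
    have "t i $$ (l,m) = col (t i) m $ l" using tc[OF i] l m by simp
    also have "\<dots> = (if l = m then 1 else 0) + (if l = i then wv i \<bullet> \<alpha> m else 0)"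
      unfolding c using l m i by simp
    finally show ?thesis .
  qed
  have idr: "idrow n i (t i)" if i: "i < n" for i
    unfolding idrow_def using tc[OF i] i tent[OF i] by auto
  have tii: "t i $$ (i,i) \<noteq> 1" if i: "i < n" for i
    using tent[OF i i i] wv[OF i] by simp
  have arrowt: "t i $$ (i,j) \<noteq> 0" if i: "i < n" and j: "j < n" and ij: "i \<noteq> j"
      and sa: "s i *\<^sub>v \<alpha> j \<noteq> \<alpha> j" for i j
  proof
    assume "t i $$ (i,j) = 0"
    then have c0: "wv i \<bullet> \<alpha> j = 0" using tent[OF i i j] ij by simp
    have "s i *\<^sub>v \<alpha> j = \<alpha> j + (wv i \<bullet> \<alpha> j) \<cdot>\<^sub>v \<alpha> i" using wv[OF i] acar[OF j] by blast
    also have "\<dots> = \<alpha> j" using c0 acar[OF i] acar[OF j] by (intro eq_vecI) auto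
    finally show False using sa by simp
  qed
  define \<psi> where "\<psi> = (\<lambda>f. ext_act n d B (\<phi> (ext_act n d A f)))"
  have l\<phi>: "linop n d \<phi>" by (rule linop_endo[OF endo])
  have l\<psi>: "linop n d \<psi>"
    unfolding \<psi>_def by (rule linop_comp[OF linop_act linop_comp[OF l\<phi> linop_act]])
  have comm: "\<psi> (ext_act n d (t i) f) = ext_act n d (t i) (\<psi> f)"
    if i: "i < n" and f: "f \<in> ext_pow n d" for i f
  proof -
    have si: "s i \<in> carrier_mat n n" by (rule sc[OF i])
    have m1: "A * t i = s i * A"
    proof -
      have "A * t i = A * (B * s i * A)" by (simp add: t_def)
      also have "\<dots> = (A * B) * s i * A" using Ac Bc si by (simp add: assoc_mult_mat[of _ n n _ n _ n])
      also have "\<dots> = s i * A" using AB si by simp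
      finally show ?thesis .
    qed
    have m2: "t i * B = B * s i"
    proof -
      have "t i * B = B * s i * A * B" by (simp add: t_def)
      also have "\<dots> = B * s i * (A * B)" using Ac Bc si by (simp add: assoc_mult_mat[of _ n n _ n _ n])
      also have "\<dots> = B * s i" using AB Bc si by simp
      finally show ?thesis .
    qed
    have e1: "ext_act n d A (ext_act n d (t i) f) = ext_act n d (s i) (ext_act n d A f)"
      using ext_act_comp[OF Ac tc[OF i], of d f] ext_act_comp[OF si Ac, of d f] m1 by simp
    have Af: "ext_act n d A f \<in> ext_pow n d" by (rule ext_act_pow)
    have e2: "\<phi> (ext_act n d (s i) (ext_act n d A f)) = ext_act n d (s i) (\<phi> (ext_act n d A f))"
      using endo ik[OF i] Af unfolding ext_endo_def by blast
    have "\<psi> (ext_act n d (t i) f) = ext_act n d B (ext_act n d (s i) (\<phi> (ext_act n d A f)))"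
      unfolding \<psi>_def using e1 e2 by simp
    also have "\<dots> = ext_act n d (B * s i) (\<phi> (ext_act n d A f))" by (rule ext_act_comp[OF Bc si])
    also have "\<dots> = ext_act n d (t i * B) (\<phi> (ext_act n d A f))" using m2 by simp
    also have "\<dots> = ext_act n d (t i) (\<psi> f)"
      unfolding \<psi>_def by (rule ext_act_comp[OF tc[OF i] Bc, symmetric])
    finally show ?thesis .
  qed
  define \<gamma> where "\<gamma> J = \<psi> (delta J) J" for J
  have R1: "\<psi> (delta J) = (\<lambda>K. \<gamma> J * delta J K)" if J: "J \<in> DS n d" for J
  proof -
    let ?g = "\<psi> (delta J)"
    have gp: "?g \<in> ext_pow n d" by (rule linop_pow[OF l\<psi> pow_delta[OF J]])
    have z: "?g L = 0" if LJ: "L \<noteq> J" for L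
    proof (rule ccontr)
      assume ne: "?g L \<noteq> 0"
      then have L: "L \<in> DS n d" using gp unfolding ext_pow_def DS_def by auto
      have "J \<subseteq> L"
      proof
        fix i assume iJ: "i \<in> J"
        show "i \<in> L"
        proof (rule ccontr)
          assume iL: "i \<notin> L"
          have i: "i < n" using iJ J by (auto simp: DS_def)
          have c1: "\<psi> (ext_act n d (t i) (delta J)) = ext_act n d (t i) ?g" by (rule comm[OF i pow_delta[OF J]])
          have c2: "ext_act n d (t i) (delta J) = (\<lambda>K. t i $$ (i,i) * delta J K)" by (rule idrow_eig[OF idr[OF i] J iJ])
          have c3: "\<psi> (\<lambda>K. t i $$ (i,i) * delta J K) = (\<lambda>K. t i $$ (i,i) * ?g K)" by (rule linop_smult[OF l\<psi> pow_delta[OF J]])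
          have "ext_act n d (t i) ?g = (\<lambda>K. t i $$ (i,i) * ?g K)" using c1 c2 c3 by simp
          then have "ext_act n d (t i) ?g L = t i $$ (i,i) * ?g L" by simp
          moreover have "ext_act n d (t i) ?g L = ?g L" by (rule idrow_fix[OF idr[OF i] L iL gp])
          ultimately have "t i $$ (i,i) * ?g L = ?g L" by simp
          then have "(t i $$ (i,i) - 1) * ?g L = 0" by (simp add: algebra_simps)
          then show False using ne tii[OF i] by simp
        qed
      qed
      moreover have "finite L" using L by (rule DS_finite)
      moreover have "card J = card L" using L J by (simp add: DS_def)
      ultimately have "J = L" by (intro card_subset_eq)
      then show False using LJ by simp
    qed
    show ?thesis
    proof
      fix K show "?g K = \<gamma> J * delta J K"
      proof (cases "K = J")
        case True
        have "delta J K = (1::'a)" using True by (simp add: delta_def)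
        then show ?thesis using True by (simp add: \<gamma>_def)
      next
        case False
        have "delta J K = (0::'a)" using False by (simp add: delta_def)
        then show ?thesis using z[OF False] by simp
      qed
    qed
  qed
  have R2: "\<gamma> X = \<gamma> (insert r (X - {x}))"
    if r: "r < n" and X: "X \<in> DS n d" and xX: "x \<in> X" and rX: "r \<notin> X" and tx: "t r $$ (r,x) \<noteq> 0" for r X x
  proof -
    let ?Y = "insert r (X - {x})"
    let ?h = "ext_act n d (t r) (delta X)"
    have key: "?Y \<in> DS n d \<and> ?h ?Y \<noteq> 0" by (rule idrow_key[OF idr[OF r] X xX rX tx])
    then have Y: "?Y \<in> DS n d" and hY: "?h ?Y \<noteq> 0" by auto
    have hp: "?h \<in> ext_pow n d" by (rule ext_act_pow)
    have e1a: "\<psi> ?h = ext_act n d (t r) (\<psi> (delta X))" by (rule comm[OF r pow_delta[OF X]])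
    have e1b: "ext_act n d (t r) (\<lambda>K. \<gamma> X * delta X K) = (\<lambda>K. \<gamma> X * ?h K)" by (rule ext_act_smult)
    have e1: "\<psi> ?h = (\<lambda>K. \<gamma> X * ?h K)" using e1a e1b R1[OF X] by simp
    have d1: "\<psi> ?h = \<psi> (\<lambda>K. \<Sum>L\<in>DS n d. ?h L * delta L K)" using arg_cong[OF decomp[OF hp], of \<psi>] .
    have d2: "\<psi> (\<lambda>K. \<Sum>L\<in>DS n d. ?h L * delta L K) = (\<lambda>K. \<Sum>L\<in>DS n d. ?h L * \<psi> (delta L) K)"
      by (rule linop_sum[OF l\<psi> finite_DS]) (simp add: pow_delta)
    have "\<psi> ?h ?Y = (\<Sum>L\<in>DS n d. ?h L * \<psi> (delta L) ?Y)" using d1 d2 by simp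
    also have "\<dots> = (\<Sum>L\<in>DS n d. if ?Y = L then ?h L * \<gamma> L else 0)"
    proof (rule sum.cong[OF HOL.refl])
      fix L assume L: "L \<in> DS n d"
      have "\<psi> (delta L) ?Y = \<gamma> L * delta L ?Y" using R1[OF L] by simp
      then show "?h L * \<psi> (delta L) ?Y = (if ?Y = L then ?h L * \<gamma> L else 0)"
        by (simp add: delta_def)
    qed
    also have "\<dots> = ?h ?Y * \<gamma> ?Y" using Y finite_DS by simp
    finally have "\<psi> ?h ?Y = ?h ?Y * \<gamma> ?Y" .
    then have "\<gamma> X * ?h ?Y = ?h ?Y * \<gamma> ?Y" using e1 by simp
    then show ?thesis using hY by simp
  qed
  show ?thesis
  proof (intro exI[of _ \<gamma>] conjI allI impI)
    fix J assume "J \<subseteq> {..<n} \<and> card J = d"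
    then have J: "J \<in> DS n d" by (simp add: DS_def)
    let ?\<omega> = "wedge n (map \<alpha> (sorted_list_of_set J))"
    have mc: "map (col A) (sorted_list_of_set J) = map \<alpha> (sorted_list_of_set J)"
    proof (rule map_cong[OF HOL.refl])
      fix j assume "j \<in> set (sorted_list_of_set J)"
      then have "j \<in> J" using DS_finite[OF J] by simp
      then have "j < n" using J by (auto simp: DS_def)
      then show "col A j = \<alpha> j" by (rule colA)
    qed
    have UJ: "ext_act n d A (delta J) = ?\<omega>" using ext_act_delta[OF J, of A] mc by simp
    have p: "\<phi> ?\<omega> \<in> ext_pow n d" using linop_pow[OF l\<phi> ext_act_pow[of n d A "delta J"]] UJ by simp
    have q1: "\<phi> ?\<omega> = ext_act n d (1\<^sub>m n) (\<phi> ?\<omega>)" using ext_act_one[OF p] by simp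
    have q2: "ext_act n d (1\<^sub>m n) (\<phi> ?\<omega>) = ext_act n d A (ext_act n d B (\<phi> ?\<omega>))"
      using ext_act_comp[OF Ac Bc, of d "\<phi> ?\<omega>"] AB by simp
    have q3: "ext_act n d B (\<phi> ?\<omega>) = (\<lambda>K. \<gamma> J * delta J K)"
      using R1[OF J] UJ unfolding \<psi>_def by simp
    have q4: "ext_act n d A (\<lambda>K. \<gamma> J * delta J K) = (\<lambda>K. \<gamma> J * ?\<omega> K)"
      using ext_act_smult[of n d A "\<gamma> J" "delta J"] UJ by simp
    show "\<phi> ?\<omega> = (\<lambda>K. \<gamma> J * ?\<omega> K)" using q1 q2 q3 q4 by simp
  next
    fix J J' assume H: "J \<subseteq> {..<n} \<and> card J = d \<and> J' \<subseteq> {..<n} \<and> card J' = d \<and> is_move s \<alpha> {..<n} J J'"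
    then have J: "J \<in> DS n d" and J': "J' \<in> DS n d" by (auto simp: DS_def)
    from H obtain i j where ij: "i \<in> J" "j \<in> J'" "J - {i} = J' - {j}"
      and ar: "arrow s \<alpha> {..<n} i j \<or> arrow s \<alpha> {..<n} j i"
      unfolding is_move_def by blast
    have inj: "i \<noteq> j" "i < n" "j < n" using ar unfolding arrow_def by auto
    have jJ: "j \<notin> J"
    proof
      assume "j \<in> J"
      then have "j \<in> J - {i}" using inj by simp
      then show False using ij by simp
    qed
    have iJ': "i \<notin> J'"
    proof
      assume "i \<in> J'"
      then have "i \<in> J' - {j}" using inj by simp
      then show False using ij by blast
    qed
    have J'eq: "J' = insert j (J - {i})" using ij by blast
    have Jeq: "J = insert i (J' - {j})" using ij by blast
    from ar show "\<gamma> J = \<gamma> J'"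
    proof
      assume "arrow s \<alpha> {..<n} i j"
      then have "s j *\<^sub>v \<alpha> i \<noteq> \<alpha> i" unfolding arrow_def by simp
      then have "t j $$ (j,i) \<noteq> 0" using arrowt[OF inj(3) inj(2)] inj by simp
      then show ?thesis using R2[OF inj(3) J ij(1) jJ] J'eq by simp
    next
      assume "arrow s \<alpha> {..<n} j i"
      then have "s i *\<^sub>v \<alpha> j \<noteq> \<alpha> j" unfolding arrow_def by simp
      then have "t i $$ (i,j) \<noteq> 0" using arrowt[OF inj(2) inj(3)] inj by simp
      then show ?thesis using R2[OF inj(2) J' ij(2) iJ'] Jeq by simp
    qed
  qed
qed

end
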